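(* Fix $n$, $\alpha$ and $\lambda\in\mathbb{C}$ with $D-\lambda I$ invertible, $\Delta_n(\lambda,\alpha)=0$ and $D_1\Delta_n(\lambda,\alpha)\ne0$. Let $p=(1,(D-\lambda I)^{-1}D\mathbf 1)$ and $$q=(q_*,\tilde q),\qquad q_*=\frac1{D_1\Delta_n(\lambda,\alpha)},\qquad \tilde q=\frac1{D_1\Delta_n(\lambda,\alpha)}(\lambda I-D^T)^{-1}\begin{pmatrix}L(\alpha)\ell_1\\\vdots\\L(\alpha)\ell_n\end{pmatrix}.$$ Then $A_n(\alpha)^Tq=\lambda q$, $q\cdot p=1$, and the spectral projection of $A_n(\alpha)$ onto the eigenspace of $\lambda$ is $(\zeta_0,\zeta)\mapsto D_1\Delta_n(\lambda,\alpha)^{-1}\big(\zeta_0+L(\alpha)P(\lambda I-D)^{-1}\zeta\big)p=(q\cdot(\zeta_0,\zeta))\,p$. If moreover $\alpha\mapsto L(\alpha)$ is differentiable, then $$q\cdot A_n'(\alpha)p=-D_1\Delta_n(\lambda,\alpha)^{-1}D_2\Delta_n(\lambda,\alpha).$$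
   Context: $X=C([-1,0],\mathbb{R})$; $L(\alpha):X\to\mathbb{R}$ is bounded linear, extended complex-linearly. A mesh $-1\le\theta_n<\dots<\theta_1<\theta_0=0$ is given, with Lagrange polynomials $\ell_j(\theta)=\prod_{0\le m\le n,\,m\neq j}\frac{\theta-\theta_m}{\theta_j-\theta_m}$, $j=0,\dots,n$. $D$ is the $n\times n$ matrix with entries $D_{ij}=\ell_j'(\theta_i)$, $i,j=1,\dots,n$; $\mathbf 1=(1,\dots,1)^T\in\mathbb{R}^n$; $I$ identity. For $y\in\mathbb{C}^n$, $Py=\sum_{j=1}^ny_j\ell_j$, $P_0(y_0,y)=y_0\ell_0+Py$. $A_n(\alpha)(y_0,y)=(L(\alpha)P_0(y_0,y),\,Dy-y_0D\mathbf 1)$ on $\mathbb{C}\times\mathbb{C}^n$, $A_n'$ its derivative in $\alpha$. $\pi_n(\lambda)=\ell_0+P(D-\lambda I)^{-1}D\mathbf 1$, $\Delta_n(\lambda,\alpha)=\lambda-L(\alpha)\pi_n(\lambda)$; $D_1,D_2$ are partial derivatives in $\lambda$ and $\alpha$. For $v,w\in\mathbb{C}^m$, $v\cdot w=\sum_iv_iw_i$. *)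

theory Defs
  imports "HOL-Analysis.Analysis" "Jordan_Normal_Form.Gauss_Jordan_Elimination"
begin

text \<open>Elements of X are represented by real functions that are continuous on [-1,0];
  only their values on [-1,0] matter.\<close>

definition contX :: "(real \<Rightarrow> real) \<Rightarrow> bool" where
  "contX f \<longleftrightarrow> continuous_on {-1..0} f"

definition supnorm :: "(real \<Rightarrow> real) \<Rightarrow> real" where
  "supnorm f = (SUP t\<in>{-1..0}. \<bar>f t\<bar>)"

definition bounded_linear_functional :: "((real \<Rightarrow> real) \<Rightarrow> real) \<Rightarrow> bool" where
  "bounded_linear_functional \<Phi> \<longleftrightarrow>
     (\<forall>f g. contX f \<longrightarrow> contX g \<longrightarrow> \<Phi> (\<lambda>t. f t + g t) = \<Phi> f + \<Phi> g) \<and>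
     (\<forall>c f. contX f \<longrightarrow> \<Phi> (\<lambda>t. c * f t) = c * \<Phi> f) \<and>
     (\<exists>C. \<forall>f. contX f \<longrightarrow> \<bar>\<Phi> f\<bar> \<le> C * supnorm f)"

definition opnorm :: "((real \<Rightarrow> real) \<Rightarrow> real) \<Rightarrow> real" where
  "opnorm \<Phi> = (SUP f\<in>{f. contX f \<and> supnorm f \<le> 1}. \<bar>\<Phi> f\<bar>)"

definition functional_differentiable_at ::
  "(real \<Rightarrow> (real \<Rightarrow> real) \<Rightarrow> real) \<Rightarrow> real \<Rightarrow> bool" where
  "functional_differentiable_at L a \<longleftrightarrow>
     (\<exists>L'. bounded_linear_functional L' \<and>
        ((\<lambda>b. opnorm (\<lambda>f. L b f - L a f - (b - a) * L' f) / \<bar>b - a\<bar>) \<longlongrightarrow> 0) (at a))"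

definition cext :: "((real \<Rightarrow> real) \<Rightarrow> real) \<Rightarrow> (real \<Rightarrow> complex) \<Rightarrow> complex" where
  "cext \<Phi> f = complex_of_real (\<Phi> (\<lambda>t. Re (f t))) + \<i> * complex_of_real (\<Phi> (\<lambda>t. Im (f t)))"

definition lag :: "(nat \<Rightarrow> real) \<Rightarrow> nat \<Rightarrow> nat \<Rightarrow> real \<Rightarrow> real" where
  "lag \<theta> n j t = (\<Prod>m\<in>{0..n} - {j}. (t - \<theta> m) / (\<theta> j - \<theta> m))"

text \<open>D (n x n), with JNF index i corresponding to the paper's index i+1.\<close>
definition Dmat :: "(nat \<Rightarrow> real) \<Rightarrow> nat \<Rightarrow> complex mat" where
  "Dmat \<theta> n = mat n n (\<lambda>(i, j). complex_of_real (deriv (lag \<theta> n (j + 1)) (\<theta> (i + 1))))"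

definition onevec :: "nat \<Rightarrow> complex vec" where
  "onevec n = vec n (\<lambda>_. 1)"

definition Pop :: "(nat \<Rightarrow> real) \<Rightarrow> nat \<Rightarrow> complex vec \<Rightarrow> real \<Rightarrow> complex" where
  "Pop \<theta> n y = (\<lambda>t. \<Sum>j<n. y $ j * complex_of_real (lag \<theta> n (j + 1) t))"

definition P0op :: "(nat \<Rightarrow> real) \<Rightarrow> nat \<Rightarrow> complex \<Rightarrow> complex vec \<Rightarrow> real \<Rightarrow> complex" where
  "P0op \<theta> n y0 y = (\<lambda>t. y0 * complex_of_real (lag \<theta> n 0 t) + Pop \<theta> n y t)"

text \<open>Vectors in C x C^n are JNF vectors of dimension n+1; component 0 is the C part,
  component i+1 is the i-th component (paper index i+1) of the C^n part.\<close>
definition headv :: "complex vec \<Rightarrow> complex" where "headv v = v $ 0"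
definition tailv :: "nat \<Rightarrow> complex vec \<Rightarrow> complex vec" where
  "tailv n v = vec n (\<lambda>i. v $ (i + 1))"
definition consv :: "nat \<Rightarrow> complex \<Rightarrow> complex vec \<Rightarrow> complex vec" where
  "consv n y0 y = vec (n + 1) (\<lambda>i. if i = 0 then y0 else y $ (i - 1))"

definition An_map :: "(real \<Rightarrow> (real \<Rightarrow> real) \<Rightarrow> real) \<Rightarrow> (nat \<Rightarrow> real) \<Rightarrow> nat \<Rightarrow> real
    \<Rightarrow> complex vec \<Rightarrow> complex vec" where
  "An_map L \<theta> n a v =
     consv n (cext (L a) (P0op \<theta> n (headv v) (tailv n v)))
       (Dmat \<theta> n *\<^sub>v tailv n v - headv v \<cdot>\<^sub>v (Dmat \<theta> n *\<^sub>v onevec n))"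

definition An :: "(real \<Rightarrow> (real \<Rightarrow> real) \<Rightarrow> real) \<Rightarrow> (nat \<Rightarrow> real) \<Rightarrow> nat \<Rightarrow> real \<Rightarrow> complex mat" where
  "An L \<theta> n a = mat (n + 1) (n + 1) (\<lambda>(i, j). An_map L \<theta> n a (unit_vec (n + 1) j) $ i)"

definition An' :: "(real \<Rightarrow> (real \<Rightarrow> real) \<Rightarrow> real) \<Rightarrow> (nat \<Rightarrow> real) \<Rightarrow> nat \<Rightarrow> real \<Rightarrow> complex mat" where
  "An' L \<theta> n a = mat (n + 1) (n + 1) (\<lambda>(i, j). vector_derivative (\<lambda>b. An L \<theta> n b $$ (i, j)) (at a))"

definition minv :: "complex mat \<Rightarrow> complex mat" where
  "minv A = the (mat_inverse A)"

definition pin :: "(nat \<Rightarrow> real) \<Rightarrow> nat \<Rightarrow> complex \<Rightarrow> real \<Rightarrow> complex" where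
  "pin \<theta> n lam = (\<lambda>t. complex_of_real (lag \<theta> n 0 t)
      + Pop \<theta> n (minv (Dmat \<theta> n - lam \<cdot>\<^sub>m 1\<^sub>m n) *\<^sub>v (Dmat \<theta> n *\<^sub>v onevec n)) t)"

definition Deltan :: "(real \<Rightarrow> (real \<Rightarrow> real) \<Rightarrow> real) \<Rightarrow> (nat \<Rightarrow> real) \<Rightarrow> nat \<Rightarrow> complex \<Rightarrow> real \<Rightarrow> complex" where
  "Deltan L \<theta> n lam a = lam - cext (L a) (pin \<theta> n lam)"

definition D1Delta :: "(real \<Rightarrow> (real \<Rightarrow> real) \<Rightarrow> real) \<Rightarrow> (nat \<Rightarrow> real) \<Rightarrow> nat \<Rightarrow> complex \<Rightarrow> real \<Rightarrow> complex" where
  "D1Delta L \<theta> n lam a = deriv (\<lambda>\<mu>. Deltan L \<theta> n \<mu> a) lam"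

definition D2Delta :: "(real \<Rightarrow> (real \<Rightarrow> real) \<Rightarrow> real) \<Rightarrow> (nat \<Rightarrow> real) \<Rightarrow> nat \<Rightarrow> complex \<Rightarrow> real \<Rightarrow> complex" where
  "D2Delta L \<theta> n lam a = vector_derivative (\<lambda>b. Deltan L \<theta> n lam b) (at a)"

definition spectral_projection :: "complex mat \<Rightarrow> complex \<Rightarrow> complex mat" where
  "spectral_projection A \<mu> = (let N = dim_row A; B = (A - \<mu> \<cdot>\<^sub>m 1\<^sub>m N) ^\<^sub>m N in
     THE P. P \<in> carrier_mat N N \<and> P * P = P \<and>
       (\<forall>v\<in>carrier_vec N. P *\<^sub>v v = v \<longleftrightarrow> B *\<^sub>v v = 0\<^sub>v N) \<and>
       (\<forall>v\<in>carrier_vec N. P *\<^sub>v v = 0\<^sub>v N \<longleftrightarrow> (\<exists>w\<in>carrier_vec N. v = B *\<^sub>v w)))"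

end

theory Submission
  imports Defs "Jordan_Normal_Form.Determinant"
begin


lemma cont_lag: "continuous_on S (lag \<theta> n j)"
  unfolding lag_def divide_inverse by (intro continuous_intros)

lemma cont_lagc: "continuous_on S (\<lambda>t. complex_of_real (lag \<theta> n j t))"
  by (intro continuous_intros cont_lag)

lemma contX_Re: "continuous_on {-1..0} f \<Longrightarrow> contX (\<lambda>t. Re (f t))"
  unfolding contX_def by (intro continuous_intros)
lemma contX_Im: "continuous_on {-1..0} f \<Longrightarrow> contX (\<lambda>t. Im (f t))"
  unfolding contX_def by (intro continuous_intros)

lemma blf_add: "bounded_linear_functional \<Phi> \<Longrightarrow> contX f \<Longrightarrow> contX g \<Longrightarrow> \<Phi> (\<lambda>t. f t + g t) = \<Phi> f + \<Phi> g"
  unfolding bounded_linear_functional_def by blast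
lemma blf_scale: "bounded_linear_functional \<Phi> \<Longrightarrow> contX f \<Longrightarrow> \<Phi> (\<lambda>t. c * f t) = c * \<Phi> f"
  unfolding bounded_linear_functional_def by blast
lemma contX_scale: "contX f \<Longrightarrow> contX (\<lambda>t. c * f t)"
  unfolding contX_def by (intro continuous_intros)
lemma contX_add: "contX f \<Longrightarrow> contX g \<Longrightarrow> contX (\<lambda>t. f t + g t)"
  unfolding contX_def by (intro continuous_intros)
lemma contX_0: "contX (\<lambda>t. 0)"
  unfolding contX_def by (intro continuous_intros)

lemma blf_lin2: assumes "bounded_linear_functional \<Phi>" "contX f" "contX g"
  shows "\<Phi> (\<lambda>t. a * f t + b * g t) = a * \<Phi> f + b * \<Phi> g"
  using blf_add[OF assms(1) contX_scale[OF assms(2)] contX_scale[OF assms(3)]] blf_scale[OF assms(1,2)] blf_scale[OF assms(1,3)] by simp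

lemma cext_add: assumes "bounded_linear_functional \<Phi>" "continuous_on {-1..0} f" "continuous_on {-1..0} g"
  shows "cext \<Phi> (\<lambda>t. f t + g t) = cext \<Phi> f + cext \<Phi> g"
proof -
  have "\<Phi> (\<lambda>t. Re (f t + g t)) = \<Phi> (\<lambda>t. Re (f t)) + \<Phi> (\<lambda>t. Re (g t))"
    using blf_add[OF assms(1) contX_Re[OF assms(2)] contX_Re[OF assms(3)]] by simp
  moreover have "\<Phi> (\<lambda>t. Im (f t + g t)) = \<Phi> (\<lambda>t. Im (f t)) + \<Phi> (\<lambda>t. Im (g t))"
    using blf_add[OF assms(1) contX_Im[OF assms(2)] contX_Im[OF assms(3)]] by simp
  ultimately show ?thesis unfolding cext_def by (simp add: algebra_simps)
qed

lemma cext_scale: assumes "bounded_linear_functional \<Phi>" "continuous_on {-1..0} f"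
  shows "cext \<Phi> (\<lambda>t. z * f t) = z * cext \<Phi> f"
proof -
  have "\<Phi> (\<lambda>t. Re (z * f t)) = \<Phi> (\<lambda>t. Re z * Re (f t) + (- Im z) * Im (f t))"
    by simp
  also have "\<dots> = Re z * \<Phi> (\<lambda>t. Re (f t)) + (- Im z) * \<Phi> (\<lambda>t. Im (f t))"
    using assms by (intro blf_lin2 contX_Re contX_Im)
  finally have 1: "\<Phi> (\<lambda>t. Re (z * f t)) = Re z * \<Phi> (\<lambda>t. Re (f t)) - Im z * \<Phi> (\<lambda>t. Im (f t))" by simp
  have "\<Phi> (\<lambda>t. Im (z * f t)) = \<Phi> (\<lambda>t. Re z * Im (f t) + Im z * Re (f t))"
    by simp
  also have "\<dots> = Re z * \<Phi> (\<lambda>t. Im (f t)) + Im z * \<Phi> (\<lambda>t. Re (f t))"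
    using assms by (intro blf_lin2 contX_Re contX_Im)
  finally have 2: "\<Phi> (\<lambda>t. Im (z * f t)) = Re z * \<Phi> (\<lambda>t. Im (f t)) + Im z * \<Phi> (\<lambda>t. Re (f t))" .
  show ?thesis unfolding cext_def 1 2
    by (simp add: complex_eq_iff algebra_simps)
qed

lemma blf_zero: assumes "bounded_linear_functional \<Phi>" shows "\<Phi> (\<lambda>t. 0) = 0"
  using blf_scale[OF assms contX_0, of 0] by simp

lemma cext_zero: assumes "bounded_linear_functional \<Phi>" shows "cext \<Phi> (\<lambda>t. 0) = 0"
  unfolding cext_def using blf_zero[OF assms] by simp

lemma cext_sum: assumes "bounded_linear_functional \<Phi>" "finite S" "\<And>j. j \<in> S \<Longrightarrow> continuous_on {-1..0} (f j)"
  shows "cext \<Phi> (\<lambda>t. \<Sum>j\<in>S. f j t) = (\<Sum>j\<in>S. cext \<Phi> (f j))"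
  using assms(2,3)
proof (induction S rule: finite_induct)
  case empty then show ?case using cext_zero[OF assms(1)] by simp
next
  case (insert x F)
  have "cext \<Phi> (\<lambda>t. \<Sum>j\<in>insert x F. f j t) = cext \<Phi> (\<lambda>t. f x t + (\<Sum>j\<in>F. f j t))"
    using insert by simp
  also have "\<dots> = cext \<Phi> (f x) + cext \<Phi> (\<lambda>t. \<Sum>j\<in>F. f j t)"
    using insert assms(1) by (intro cext_add) (auto intro!: continuous_intros)
  finally show ?case using insert by simp
qed

definition lc :: "(nat \<Rightarrow> real) \<Rightarrow> nat \<Rightarrow> nat \<Rightarrow> real \<Rightarrow> complex" where
  "lc \<theta> n j = (\<lambda>t. complex_of_real (lag \<theta> n j t))"

lemma cont_lc: "continuous_on S (lc \<theta> n j)" unfolding lc_def by (rule cont_lagc)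

lemma cont_Pop: "continuous_on S (Pop \<theta> n y)"
  unfolding Pop_def by (intro continuous_intros cont_lag)

lemma cont_P0op: "continuous_on S (P0op \<theta> n y0 y)"
  unfolding P0op_def by (intro continuous_intros cont_lag cont_Pop)

lemma cext_Pop: assumes "bounded_linear_functional \<Phi>"
  shows "cext \<Phi> (Pop \<theta> n y) = (\<Sum>j<n. y $ j * cext \<Phi> (lc \<theta> n (j+1)))"
proof -
  have "cext \<Phi> (Pop \<theta> n y) = (\<Sum>j<n. cext \<Phi> (\<lambda>t. y $ j * lc \<theta> n (j+1) t))"
    unfolding Pop_def lc_def using assms by (intro cext_sum) (auto intro!: continuous_intros cont_lag)
  also have "\<dots> = (\<Sum>j<n. y $ j * cext \<Phi> (lc \<theta> n (j+1)))"
    using assms by (intro sum.cong refl cext_scale cont_lc)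
  finally show ?thesis .
qed

lemma cext_P0op: assumes "bounded_linear_functional \<Phi>"
  shows "cext \<Phi> (P0op \<theta> n y0 y) = y0 * cext \<Phi> (lc \<theta> n 0) + (\<Sum>j<n. y $ j * cext \<Phi> (lc \<theta> n (j+1)))"
proof -
  have e: "P0op \<theta> n y0 y = (\<lambda>t. y0 * lc \<theta> n 0 t + Pop \<theta> n y t)" by (simp add: P0op_def lc_def)
  have "cext \<Phi> (P0op \<theta> n y0 y) = cext \<Phi> (\<lambda>t. y0 * lc \<theta> n 0 t) + cext \<Phi> (Pop \<theta> n y)"
    unfolding e using assms by (intro cext_add) (auto intro!: continuous_intros cont_lc cont_Pop)
  then show ?thesis using assms by (simp add: cext_scale cont_lc cext_Pop)
qed

lemma cext_pin: assumes "bounded_linear_functional \<Phi>"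
  shows "cext \<Phi> (pin \<theta> n lam) = cext \<Phi> (lc \<theta> n 0) + (\<Sum>j<n. (minv (Dmat \<theta> n - lam \<cdot>\<^sub>m 1\<^sub>m n) *\<^sub>v (Dmat \<theta> n *\<^sub>v onevec n)) $ j * cext \<Phi> (lc \<theta> n (j+1)))"
proof -
  have "pin \<theta> n lam = P0op \<theta> n 1 (minv (Dmat \<theta> n - lam \<cdot>\<^sub>m 1\<^sub>m n) *\<^sub>v (Dmat \<theta> n *\<^sub>v onevec n))"
    unfolding pin_def P0op_def by simp
  then show ?thesis using cext_P0op[OF assms] by simp
qed



definition Lv :: "(real \<Rightarrow> (real \<Rightarrow> real) \<Rightarrow> real) \<Rightarrow> (nat \<Rightarrow> real) \<Rightarrow> nat \<Rightarrow> real \<Rightarrow> complex vec" where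
  "Lv L \<theta> n a = vec n (\<lambda>j. cext (L a) (lc \<theta> n (j+1)))"
definition l0 :: "(real \<Rightarrow> (real \<Rightarrow> real) \<Rightarrow> real) \<Rightarrow> (nat \<Rightarrow> real) \<Rightarrow> nat \<Rightarrow> real \<Rightarrow> complex" where
  "l0 L \<theta> n a = cext (L a) (lc \<theta> n 0)"

lemma Lv_carrier[simp]: "Lv L \<theta> n a \<in> carrier_vec n" unfolding Lv_def by simp
lemma Dmat_carrier[simp]: "Dmat \<theta> n \<in> carrier_mat n n" unfolding Dmat_def by simp
lemma onevec_carrier[simp]: "onevec n \<in> carrier_vec n" unfolding onevec_def by simp

lemma cext_P0op': assumes "bounded_linear_functional (L a)" "y \<in> carrier_vec n"
  shows "cext (L a) (P0op \<theta> n y0 y) = y0 * l0 L \<theta> n a + y \<bullet> Lv L \<theta> n a"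
  using assms unfolding l0_def Lv_def scalar_prod_def
  by (simp add: cext_P0op lessThan_atLeast0)

lemma headv_unit: "headv (unit_vec (Suc n) j) = (if j = 0 then 1 else 0)"
  unfolding headv_def by (simp add: unit_vec_def)
lemma tailv_unit0: "tailv n (unit_vec (Suc n) 0) = 0\<^sub>v n"
  unfolding tailv_def by (intro eq_vecI) (auto simp: unit_vec_def)
lemma tailv_unitS: "tailv n (unit_vec (Suc n) (Suc j)) = unit_vec n j"
  unfolding tailv_def by (intro eq_vecI) (auto simp: unit_vec_def)

lemma dim_Dmat[simp]: "dim_row (Dmat \<theta> n) = n" "dim_col (Dmat \<theta> n) = n" unfolding Dmat_def by simp_all
lemma dim_An[simp]: "dim_row (An L \<theta> n a) = n+1" "dim_col (An L \<theta> n a) = n+1" unfolding An_def by simp_all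
lemma An_carrier[simp]: "An L \<theta> n a \<in> carrier_mat (n+1) (n+1)" unfolding An_def by simp

lemma mult_mat_vec_zero': "A \<in> carrier_mat m k \<Longrightarrow> A *\<^sub>v 0\<^sub>v k = 0\<^sub>v m"
  by (intro eq_vecI) auto

lemma An_entry: assumes "bounded_linear_functional (L a)" "i < n+1" "j < n+1"
  shows "An L \<theta> n a $$ (i,j) = (if i = 0 then (if j = 0 then l0 L \<theta> n a else Lv L \<theta> n a $ (j-1))
     else (if j = 0 then - ((Dmat \<theta> n *\<^sub>v onevec n) $ (i-1)) else Dmat \<theta> n $$ (i-1,j-1)))"
proof -
  have e: "An L \<theta> n a $$ (i,j) = An_map L \<theta> n a (unit_vec (n + 1) j) $ i"
    unfolding An_def using assms by simp
  show ?thesis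
  proof (cases j)
    case 0
    then show ?thesis unfolding e
      using assms by (simp add: An_map_def consv_def headv_unit tailv_unit0 cext_P0op' mult_mat_vec_zero'[OF Dmat_carrier])
  next
    case (Suc j')
    then have j': "j' < n" using assms by simp
    have e': "An L \<theta> n a $$ (i,Suc j') = An_map L \<theta> n a (unit_vec (Suc n) (Suc j')) $ i"
      using e Suc by simp
    show ?thesis unfolding Suc e'
      using assms j' by (simp add: An_map_def consv_def headv_unit tailv_unitS cext_P0op')
  qed
qed


abbreviation "d1 \<theta> n \<equiv> Dmat \<theta> n *\<^sub>v onevec n"

lemma An_mult: assumes "bounded_linear_functional (L a)" "v \<in> carrier_vec (n+1)"
  shows "(An L \<theta> n a *\<^sub>v v) $ 0 = l0 L \<theta> n a * v $ 0 + Lv L \<theta> n a \<bullet> tailv n v"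
    "i < n \<Longrightarrow> (An L \<theta> n a *\<^sub>v v) $ Suc i = (Dmat \<theta> n *\<^sub>v tailv n v) $ i - v $ 0 * d1 \<theta> n $ i"
proof -
  have e: "(An L \<theta> n a *\<^sub>v v) $ i = (\<Sum>k\<in>{0..<Suc n}. An L \<theta> n a $$ (i,k) * v $ k)" if "i < Suc n" for i
    using that assms(2) by (simp add: scalar_prod_def row_def)
  show "(An L \<theta> n a *\<^sub>v v) $ 0 = l0 L \<theta> n a * v $ 0 + Lv L \<theta> n a \<bullet> tailv n v"
    unfolding e[OF zero_less_Suc] sum.atLeast0_lessThan_Suc_shift
    using assms by (simp add: An_entry scalar_prod_def tailv_def)
  show "(An L \<theta> n a *\<^sub>v v) $ Suc i = (Dmat \<theta> n *\<^sub>v tailv n v) $ i - v $ 0 * d1 \<theta> n $ i" if "i < n"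
    unfolding e[OF Suc_mono[OF that]] sum.atLeast0_lessThan_Suc_shift using that assms
    by (simp add: An_entry scalar_prod_def tailv_def row_def onevec_def del: sum.atLeast0_lessThan_Suc)
qed

lemma AnT_mult: assumes "bounded_linear_functional (L a)" "v \<in> carrier_vec (n+1)"
  shows "(transpose_mat (An L \<theta> n a) *\<^sub>v v) $ 0 = l0 L \<theta> n a * v $ 0 - d1 \<theta> n \<bullet> tailv n v"
    "i < n \<Longrightarrow> (transpose_mat (An L \<theta> n a) *\<^sub>v v) $ Suc i = v $ 0 * Lv L \<theta> n a $ i + (transpose_mat (Dmat \<theta> n) *\<^sub>v tailv n v) $ i"
proof -
  have e: "(transpose_mat (An L \<theta> n a) *\<^sub>v v) $ i = (\<Sum>k\<in>{0..<Suc n}. An L \<theta> n a $$ (k,i) * v $ k)" if "i < Suc n" for i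
    using that assms(2) by (simp add: scalar_prod_def row_def)
  show "(transpose_mat (An L \<theta> n a) *\<^sub>v v) $ 0 = l0 L \<theta> n a * v $ 0 - d1 \<theta> n \<bullet> tailv n v"
    unfolding e[OF zero_less_Suc] sum.atLeast0_lessThan_Suc_shift
    using assms by (simp add: An_entry scalar_prod_def tailv_def sum_negf)
  show "(transpose_mat (An L \<theta> n a) *\<^sub>v v) $ Suc i = v $ 0 * Lv L \<theta> n a $ i + (transpose_mat (Dmat \<theta> n) *\<^sub>v tailv n v) $ i" if "i < n"
    unfolding e[OF Suc_mono[OF that]] sum.atLeast0_lessThan_Suc_shift using that assms
    by (simp add: An_entry scalar_prod_def tailv_def row_def onevec_def del: sum.atLeast0_lessThan_Suc)
qed

lemma scalar_prod_split: assumes "v \<in> carrier_vec (n+1)"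
  shows "u \<bullet> v = u $ 0 * v $ 0 + tailv n u \<bullet> tailv n v"
proof -
  have "dim_vec v = Suc n" using assms by simp
  then show ?thesis unfolding scalar_prod_def \<open>dim_vec v = Suc n\<close> sum.atLeast0_lessThan_Suc_shift
    by (simp add: tailv_def)
qed



lemma minv_props: assumes A: "(A :: complex mat) \<in> carrier_mat n n" and d: "Determinant.det A \<noteq> 0"
  shows "minv A \<in> carrier_mat n n" "A * minv A = 1\<^sub>m n" "minv A * A = 1\<^sub>m n"
proof -
  have "mat_inverse A \<noteq> None"
  proof
    assume N: "mat_inverse A = None"
    have "A \<notin> Units (ring_mat TYPE(complex) n ())" by (rule mat_inverse(1)[OF A N])
    moreover have "A \<in> Units (ring_mat TYPE(complex) n ())" by (rule det_non_zero_imp_unit[OF A d])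
    ultimately show False by (rule notE)
  qed
  then obtain B where B: "mat_inverse A = Some B" by auto
  have mB: "minv A = B" unfolding minv_def B by simp
  from mat_inverse(2)[OF A B] show "minv A \<in> carrier_mat n n" "A * minv A = 1\<^sub>m n" "minv A * A = 1\<^sub>m n"
    unfolding mB by blast+
qed

lemma invertible_det: assumes A: "(A :: complex mat) \<in> carrier_mat n n" and i: "invertible_mat A"
  shows "Determinant.det A \<noteq> 0"
proof -
  have "\<exists>B. A * B = 1\<^sub>m (dim_row A) \<and> B * A = 1\<^sub>m (dim_row B)"
    using i unfolding invertible_mat_def inverts_mat_def by blast
  moreover have "dim_row A = n" using A by blast
  ultimately obtain B where AB: "A * B = 1\<^sub>m n" and BA: "B * A = 1\<^sub>m (dim_row B)"
    by metis
  have "dim_col B = n" using arg_cong[OF AB, of dim_col] by simp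
  moreover have "dim_row B = n" using arg_cong[OF BA, of dim_col] A by simp
  ultimately have Bc: "B \<in> carrier_mat n n" by auto
  have "Determinant.det (A * B) = 1" unfolding AB by (rule det_one)
  then have "Determinant.det A * Determinant.det B = 1"
    unfolding det_mult[OF A Bc] .
  then show ?thesis using zero_neq_one mult_zero_left by (metis (no_types))
qed

lemma minv_vec: assumes A: "(A :: complex mat) \<in> carrier_mat n n" and d: "Determinant.det A \<noteq> 0" and u: "u \<in> carrier_vec n"
  shows "A *\<^sub>v (minv A *\<^sub>v u) = u" "minv A *\<^sub>v (A *\<^sub>v u) = u"
proof -
  note m = minv_props[OF A d]
  have "A *\<^sub>v (minv A *\<^sub>v u) = (A * minv A) *\<^sub>v u" by (rule assoc_mult_mat_vec[symmetric, OF A m(1) u])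
  then show "A *\<^sub>v (minv A *\<^sub>v u) = u" using m(2) u by simp
  have "minv A *\<^sub>v (A *\<^sub>v u) = (minv A * A) *\<^sub>v u" by (rule assoc_mult_mat_vec[symmetric, OF m(1) A u])
  then show "minv A *\<^sub>v (A *\<^sub>v u) = u" using m(3) u by simp
qed

lemma transpose_scalar: assumes A: "(A :: complex mat) \<in> carrier_mat n n" "x \<in> carrier_vec n" "y \<in> carrier_vec n"
  shows "(transpose_mat A *\<^sub>v y) \<bullet> x = y \<bullet> (A *\<^sub>v x)"
  by (rule transpose_vec_mult_scalar[OF assms(1,2,3)])

lemma smult_mat_vec: assumes "(A :: complex mat) \<in> carrier_mat n m" "v \<in> carrier_vec m"
  shows "(c \<cdot>\<^sub>m A) *\<^sub>v v = c \<cdot>\<^sub>v (A *\<^sub>v v)"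
  using assms by (intro eq_vecI) (auto simp: scalar_prod_def sum_distrib_left ac_simps)


definition holo_entries :: "(complex \<Rightarrow> complex mat) \<Rightarrow> nat \<Rightarrow> complex set \<Rightarrow> bool" where
  "holo_entries X m S \<longleftrightarrow> (\<forall>\<mu>. X \<mu> \<in> carrier_mat m m) \<and> (\<forall>i<m. \<forall>j<m. (\<lambda>\<mu>. X \<mu> $$ (i,j)) holomorphic_on S)"

lemma holo_entriesD: assumes "holo_entries X m S"
  shows "X \<mu> \<in> carrier_mat m m" "i < m \<Longrightarrow> j < m \<Longrightarrow> (\<lambda>\<mu>. X \<mu> $$ (i,j)) holomorphic_on S"
  using assms unfolding holo_entries_def by simp_all

lemma det_holo: assumes "holo_entries X m S"
  shows "(\<lambda>\<mu>. Determinant.det (X \<mu>)) holomorphic_on S"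
proof -
  have X: "X \<mu> \<in> carrier_mat m m" for \<mu> using assms unfolding holo_entries_def by blast
  have e: "(\<lambda>\<mu>. Determinant.det (X \<mu>)) = (\<lambda>\<mu>. \<Sum>p\<in>{p. p permutes {0..<m}}. signof p * (\<Prod>i=0..<m. X \<mu> $$ (i, p i)))"
    using det_def'[OF X] by blast
  have "(\<lambda>\<mu>. X \<mu> $$ (i, p i)) holomorphic_on S" if "p permutes {0..<m}" "i \<in> {0..<m}" for p i
  proof -
    have "p i < m" using permutes_in_image[OF that(1)] that(2) by auto
    then show ?thesis using that(2) by (intro holo_entriesD(2)[OF assms]) auto
  qed
  then show ?thesis unfolding e
    by (intro holomorphic_intros) auto
qed

lemma delete_holo: assumes "holo_entries X m S"
  shows "holo_entries (\<lambda>\<mu>. mat_delete (X \<mu>) i j) (m-1) S"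
proof -
  have X: "X \<mu> \<in> carrier_mat m m" for \<mu> using assms unfolding holo_entries_def by blast
  have H: "(\<lambda>\<mu>. mat_delete (X \<mu>) i j $$ (a,b)) holomorphic_on S" if "a < m-1" "b < m-1" for a b
  proof -
    have e: "mat_delete (X \<mu>) i j $$ (a,b) = X \<mu> $$ (if a < i then a else Suc a, if b < j then b else Suc b)" for \<mu>
      unfolding mat_delete_def using that X[of \<mu>] by simp
    have "(if a < i then a else Suc a) < m" "(if b < j then b else Suc b) < m" using that by auto
    then show ?thesis unfolding e by (rule holo_entriesD(2)[OF assms])
  qed
  show ?thesis unfolding holo_entries_def
  proof (intro conjI allI impI)
    fix \<mu> show "mat_delete (X \<mu>) i j \<in> carrier_mat (m-1) (m-1)" by (rule mat_delete_carrier[OF X])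
  next
    fix a b assume "a < m-1" "b < m-1"
    then show "(\<lambda>\<mu>. mat_delete (X \<mu>) i j $$ (a,b)) holomorphic_on S" by (rule H)
  qed
qed

lemma adj_holo: assumes "holo_entries X m S" "j < m" "k < m"
  shows "(\<lambda>\<mu>. adj_mat (X \<mu>) $$ (j,k)) holomorphic_on S"
proof -
  have X: "X \<mu> \<in> carrier_mat m m" for \<mu> using assms unfolding holo_entries_def by blast
  have e: "adj_mat (X \<mu>) $$ (j,k) = (-1)^(k+j) * Determinant.det (mat_delete (X \<mu>) k j)" for \<mu>
    unfolding adj_mat_def cofactor_def using X[of \<mu>] assms by simp
  show ?thesis unfolding e
    by (intro holomorphic_intros det_holo[OF delete_holo[OF assms(1)]])
qed

lemma E_holo: assumes "A \<in> carrier_mat n n"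
  shows "holo_entries (\<lambda>\<mu>. A - \<mu> \<cdot>\<^sub>m 1\<^sub>m n) n S"
proof -
  have "(\<lambda>\<mu>. (A - \<mu> \<cdot>\<^sub>m 1\<^sub>m n) $$ (i,j)) holomorphic_on S" if "i < n" "j < n" for i j
  proof -
    have e: "(A - \<mu> \<cdot>\<^sub>m 1\<^sub>m n) $$ (i,j) = A $$ (i,j) - \<mu> * (if i = j then 1 else 0)" for \<mu>
      using that assms by simp
    show ?thesis unfolding e by (intro holomorphic_intros)
  qed
  then show ?thesis unfolding holo_entries_def using assms by auto
qed




lemma Emat_entry: "(A::complex mat) \<in> carrier_mat n n \<Longrightarrow> i < n \<Longrightarrow> k < n \<Longrightarrow>
  (A - \<mu> \<cdot>\<^sub>m 1\<^sub>m n) $$ (i,k) = A $$ (i,k) - \<mu> * (if i = k then 1 else 0)"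
  by simp

lemma Emat_mult: assumes "(A::complex mat) \<in> carrier_mat n n" "v \<in> carrier_vec n" "i < n"
  shows "((A - \<mu> \<cdot>\<^sub>m 1\<^sub>m n) *\<^sub>v v) $ i = (\<Sum>k<n. (A $$ (i,k) - \<mu> * (if i = k then 1 else 0)) * v $ k)"
proof -
  have "((A - \<mu> \<cdot>\<^sub>m 1\<^sub>m n) *\<^sub>v v) $ i = (\<Sum>k\<in>{0..<n}. (A - \<mu> \<cdot>\<^sub>m 1\<^sub>m n) $$ (i,k) * v $ k)"
    using assms by (simp add: scalar_prod_def row_def)
  also have "\<dots> = (\<Sum>k<n. (A $$ (i,k) - \<mu> * (if i = k then 1 else 0)) * v $ k)"
    unfolding lessThan_atLeast0 using assms by (intro sum.cong refl) (simp add: Emat_entry)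
  finally show ?thesis .
qed

lemma c_deriv:
  fixes A :: "complex mat" and b :: "complex vec"
  assumes A: "A \<in> carrier_mat n n" and b: "b \<in> carrier_vec n" and d: "Determinant.det (A - lam \<cdot>\<^sub>m 1\<^sub>m n) \<noteq> 0"
  shows "\<exists>c'. c' \<in> carrier_vec n \<and> (A - lam \<cdot>\<^sub>m 1\<^sub>m n) *\<^sub>v c' = minv (A - lam \<cdot>\<^sub>m 1\<^sub>m n) *\<^sub>v b \<and>
     (\<forall>j<n. ((\<lambda>\<mu>. (minv (A - \<mu> \<cdot>\<^sub>m 1\<^sub>m n) *\<^sub>v b) $ j) has_field_derivative c' $ j) (at lam))"
proof -
  define E where "E = (\<lambda>\<mu>. A - \<mu> \<cdot>\<^sub>m 1\<^sub>m n)"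
  define c where "c = (\<lambda>\<mu>. minv (E \<mu>) *\<^sub>v b)"
  have EC: "E \<mu> \<in> carrier_mat n n" for \<mu> unfolding E_def by (intro minus_carrier_mat smult_carrier_mat one_carrier_mat)
  define h where "h = (\<lambda>\<mu>. Determinant.det (E \<mu>))"
  have hh: "h holomorphic_on UNIV" unfolding h_def E_def by (rule det_holo[OF E_holo[OF A]])
  define S where "S = {\<mu>. h \<mu> \<noteq> 0}"
  have oS: "open S" unfolding S_def
    by (rule open_Collect_neq) (auto intro: holomorphic_on_imp_continuous_on[OF hh])
  have lS: "lam \<in> S" unfolding S_def h_def E_def using d by simp
  define g where "g = (\<lambda>j \<mu>. (\<Sum>k<n. adj_mat (E \<mu>) $$ (j,k) * b $ k) / h \<mu>)"
  have gh: "g j holomorphic_on S" if "j < n" for j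
  proof -
    have "(\<lambda>\<mu>. adj_mat (E \<mu>) $$ (j,k)) holomorphic_on S" if "k \<in> {..<n}" for k
      unfolding E_def using that \<open>j < n\<close> by (intro adj_holo[OF E_holo[OF A]]) auto
    then show ?thesis unfolding g_def
      by (intro holomorphic_intros holomorphic_on_subset[OF hh]) (auto simp: S_def)
  qed
  have cg: "c \<mu> $ j = g j \<mu>" if "\<mu> \<in> S" "j < n" for \<mu> j
  proof -
    have h0: "h \<mu> \<noteq> 0" using that S_def by simp
    have adjC: "adj_mat (E \<mu>) \<in> carrier_mat n n" using adj_mat(1)[OF EC] .
    define v where "v = (1 / h \<mu>) \<cdot>\<^sub>v (adj_mat (E \<mu>) *\<^sub>v b)"
    have vC: "v \<in> carrier_vec n" unfolding v_def using adjC b by simp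
    have "E \<mu> *\<^sub>v v = (1 / h \<mu>) \<cdot>\<^sub>v (E \<mu> *\<^sub>v (adj_mat (E \<mu>) *\<^sub>v b))"
      unfolding v_def by (rule mult_mat_vec[OF EC]) (use adjC b in simp)
    also have "E \<mu> *\<^sub>v (adj_mat (E \<mu>) *\<^sub>v b) = (E \<mu> * adj_mat (E \<mu>)) *\<^sub>v b"
      by (rule assoc_mult_mat_vec[symmetric, OF EC adjC b])
    also have "\<dots> = (h \<mu> \<cdot>\<^sub>m 1\<^sub>m n) *\<^sub>v b" unfolding adj_mat(2)[OF EC] h_def ..
    also have "\<dots> = h \<mu> \<cdot>\<^sub>v b" using b by (simp add: smult_mat_vec[of _ n n])
    finally have "E \<mu> *\<^sub>v v = b" using h0 b by (auto intro!: eq_vecI)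
    moreover have dd: "Determinant.det (E \<mu>) \<noteq> 0" using h0 h_def by simp
    ultimately have "c \<mu> = v" unfolding c_def using minv_vec(2)[OF EC dd vC] by simp
    then show ?thesis unfolding v_def g_def using that adjC b
      by (simp add: scalar_prod_def lessThan_atLeast0 row_def)
  qed
  define g' where "g' = (\<lambda>j. deriv (g j) lam)"
  have gd: "(g j has_field_derivative g' j) (at lam)" if "j < n" for j
    unfolding g'_def using holomorphic_derivI[OF gh[OF that] oS lS, of UNIV] by simp
  define c' where "c' = vec n g'"
  have cd: "((\<lambda>\<mu>. c \<mu> $ j) has_field_derivative c' $ j) (at lam)" if "j < n" for j
  proof -
    have "((\<lambda>\<mu>. c \<mu> $ j) has_field_derivative g' j) (at lam)"
      by (rule has_field_derivative_transform_within_open[OF gd[OF that] oS lS]) (simp add: cg that)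
    then show ?thesis unfolding c'_def using that by simp
  qed
  have Ec': "E lam *\<^sub>v c' = c lam"
  proof (rule eq_vecI)
    show "dim_vec (E lam *\<^sub>v c') = dim_vec (c lam)" unfolding c_def using EC minv_props(1)[OF EC, of lam] d
      by (simp add: E_def)
    fix i assume "i < dim_vec (c lam)"
    then have i: "i < n" unfolding c_def using minv_props(1)[OF EC, of lam] d by (simp add: E_def)
    define \<phi> where "\<phi> = (\<lambda>\<mu>. \<Sum>k<n. (A $$ (i,k) - \<mu> * (if i = k then 1 else 0)) * g k \<mu>)"
    have dk: "((\<lambda>\<mu>. (A $$ (i,k) - \<mu> * (if i = k then 1 else 0)) * g k \<mu>) has_field_derivative
        ((- (if i = k then 1 else 0)) * g k lam + (A $$ (i,k) - lam * (if i = k then 1 else 0)) * g' k)) (at lam)"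
      if "k \<in> {..<n}" for k
    proof -
      have d1: "((\<lambda>\<mu>. A $$ (i,k) - \<mu> * (if i = k then 1 else 0)) has_field_derivative (0 - 1 * (if i = k then 1 else 0))) (at lam)"
        by (intro DERIV_diff DERIV_const DERIV_cmult_right DERIV_ident)
      have k: "k < n" using that by simp
      from DERIV_mult'[OF d1 gd[OF k]] show ?thesis by (simp add: algebra_simps)
    qed
    have Dphi: "(\<phi> has_field_derivative (\<Sum>k<n. (- (if i = k then 1 else 0)) * g k lam + (A $$ (i,k) - lam * (if i = k then 1 else 0)) * g' k)) (at lam)"
      unfolding \<phi>_def by (rule DERIV_sum) (rule dk)
    have phib: "\<phi> \<mu> = b $ i" if "\<mu> \<in> S" for \<mu>
    proof -
      have d\<mu>: "Determinant.det (E \<mu>) \<noteq> 0" using that unfolding S_def h_def by simp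
      have "b $ i = (E \<mu> *\<^sub>v c \<mu>) $ i" unfolding c_def using minv_vec(1)[OF EC d\<mu> b] by simp
      also have "\<dots> = (\<Sum>k<n. (A $$ (i,k) - \<mu> * (if i = k then 1 else 0)) * c \<mu> $ k)"
        unfolding E_def by (rule Emat_mult[OF A _ i]) (use minv_props(1)[OF EC d\<mu>] b in \<open>simp add: c_def E_def\<close>)
      also have "\<dots> = \<phi> \<mu>" unfolding \<phi>_def using cg[OF that] by simp
      finally show ?thesis by simp
    qed
    have Db: "((\<lambda>_. b $ i) has_field_derivative (\<Sum>k<n. (- (if i = k then 1 else 0)) * g k lam + (A $$ (i,k) - lam * (if i = k then 1 else 0)) * g' k)) (at lam)"
      by (rule has_field_derivative_transform_within_open[OF Dphi oS lS]) (rule phib)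
    have z: "(\<Sum>k<n. (- (if i = k then 1 else 0)) * g k lam + (A $$ (i,k) - lam * (if i = k then 1 else 0)) * g' k) = 0"
      using DERIV_unique[OF Db DERIV_const] by simp
    have "(\<Sum>k<n. (- (if i = k then 1 else 0)) * g k lam + (A $$ (i,k) - lam * (if i = k then 1 else 0)) * g' k)
       = - g i lam + (E lam *\<^sub>v c') $ i"
    proof -
      have s1: "(\<Sum>k<n. (- (if i = k then 1 else 0)) * g k lam) = - g i lam"
      proof -
        have "(\<Sum>k<n. (- (if i = k then 1 else 0)) * g k lam) = (\<Sum>k<n. if k = i then - g k lam else 0)"
          by (intro sum.cong) auto
        also have "\<dots> = - g i lam" using i by simp
        finally show ?thesis .
      qed
      have c'C: "c' \<in> carrier_vec n" unfolding c'_def by simp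
      have s2: "(\<Sum>k<n. (A $$ (i,k) - lam * (if i = k then 1 else 0)) * g' k) = (E lam *\<^sub>v c') $ i"
      proof -
        have "(\<Sum>k<n. (A $$ (i,k) - lam * (if i = k then 1 else 0)) * g' k)
            = (\<Sum>k<n. (A $$ (i,k) - lam * (if i = k then 1 else 0)) * c' $ k)"
          by (intro sum.cong) (auto simp: c'_def)
        also have "\<dots> = (E lam *\<^sub>v c') $ i" unfolding E_def by (rule Emat_mult[OF A c'C i, symmetric])
        finally show ?thesis .
      qed
      show ?thesis unfolding sum.distrib s1 s2 ..
    qed
    then show "(E lam *\<^sub>v c') $ i = c lam $ i" using z cg[OF lS i] by simp
  qed
  show ?thesis
    using Ec' cd unfolding c_def E_def c'_def by (intro exI[of _ "vec n g'"]) auto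
qed



lemma supnorm_facts: assumes "contX g"
  shows "bdd_above ((\<lambda>t. \<bar>g t\<bar>) ` {-1..0})" "t \<in> {-1..0} \<Longrightarrow> \<bar>g t\<bar> \<le> supnorm g" "0 \<le> supnorm g"
proof -
  have "compact ((\<lambda>t. \<bar>g t\<bar>) ` {-1..(0::real)})"
    using assms unfolding contX_def by (intro compact_continuous_image continuous_intros) auto
  then show b: "bdd_above ((\<lambda>t. \<bar>g t\<bar>) ` {-1..0})" by (intro bounded_imp_bdd_above compact_imp_bounded)
  show u: "\<bar>g t\<bar> \<le> supnorm g" if "t \<in> {-1..0}" for t
    unfolding supnorm_def using that b by (intro cSUP_upper)
  have "\<bar>g 0\<bar> \<le> supnorm g" by (rule u) auto
  then show "0 \<le> supnorm g" by linarith
qed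

lemma opnorm_bound: assumes "bounded_linear_functional \<Phi>" "contX g"
  shows "\<bar>\<Phi> g\<bar> \<le> opnorm \<Phi> * supnorm g"
proof -
  from assms(1) obtain C where C: "\<And>f. contX f \<Longrightarrow> \<bar>\<Phi> f\<bar> \<le> C * supnorm f"
    unfolding bounded_linear_functional_def by blast
  have bdd: "bdd_above ((\<lambda>f. \<bar>\<Phi> f\<bar>) ` {f. contX f \<and> supnorm f \<le> 1})"
  proof (rule bdd_aboveI2)
    fix f assume "f \<in> {f. contX f \<and> supnorm f \<le> 1}"
    then have f: "contX f" "supnorm f \<le> 1" by auto
    have "0 \<le> supnorm f" using supnorm_facts(3)[OF f(1)] .
    then have "C * supnorm f \<le> \<bar>C\<bar>" using f(2)
      by (metis abs_ge_self abs_mult abs_of_nonneg mult_left_le mult.commute order_trans abs_ge_zero)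
    then show "\<bar>\<Phi> f\<bar> \<le> \<bar>C\<bar>" using C[OF f(1)] by linarith
  qed
  define s where "s = supnorm g"
  have s0: "0 \<le> s" unfolding s_def using supnorm_facts(3)[OF assms(2)] .
  show ?thesis
  proof (cases "s = 0")
    case True
    then have "\<bar>\<Phi> g\<bar> \<le> 0" using C[OF assms(2)] unfolding s_def by simp
    then show ?thesis using True unfolding s_def by simp
  next
    case False
    then have sp: "s > 0" using s0 by simp
    define h where "h = (\<lambda>t. (1/s) * g t)"
    have hc: "contX h" unfolding h_def by (rule contX_scale[OF assms(2)])
    have "supnorm h \<le> 1" unfolding supnorm_def
    proof (rule cSUP_least)
      show "{-1..(0::real)} \<noteq> {}" by simp
      fix t :: real assume "t \<in> {-1..0}"
      then have "\<bar>g t\<bar> \<le> s" unfolding s_def by (rule supnorm_facts(2)[OF assms(2)])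
      then show "\<bar>h t\<bar> \<le> 1" unfolding h_def using sp by (simp add: abs_mult divide_le_eq_1)
    qed
    then have "\<bar>\<Phi> h\<bar> \<le> opnorm \<Phi>" unfolding opnorm_def using hc
      by (intro cSUP_upper[OF _ bdd]) auto
    moreover have "\<Phi> h = (1/s) * \<Phi> g" unfolding h_def by (rule blf_scale[OF assms])
    ultimately have "\<bar>\<Phi> g\<bar> / s \<le> opnorm \<Phi>" using sp by (simp add: abs_mult)
    then show ?thesis using sp unfolding s_def[symmetric] by (simp add: divide_le_eq mult.commute)
  qed
qed

lemma blf_combo: assumes "bounded_linear_functional \<Phi>1" "bounded_linear_functional \<Phi>2" "bounded_linear_functional \<Phi>3"
  shows "bounded_linear_functional (\<lambda>f. \<Phi>1 f - \<Phi>2 f - c * \<Phi>3 f)"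
proof -
  obtain C1 where C1: "\<And>f. contX f \<Longrightarrow> \<bar>\<Phi>1 f\<bar> \<le> C1 * supnorm f" using assms(1) unfolding bounded_linear_functional_def by blast
  obtain C2 where C2: "\<And>f. contX f \<Longrightarrow> \<bar>\<Phi>2 f\<bar> \<le> C2 * supnorm f" using assms(2) unfolding bounded_linear_functional_def by blast
  obtain C3 where C3: "\<And>f. contX f \<Longrightarrow> \<bar>\<Phi>3 f\<bar> \<le> C3 * supnorm f" using assms(3) unfolding bounded_linear_functional_def by blast
  have B: "\<bar>\<Phi>1 f - \<Phi>2 f - c * \<Phi>3 f\<bar> \<le> (C1 + C2 + \<bar>c\<bar> * C3) * supnorm f" if "contX f" for f
  proof -
    have "\<bar>c * \<Phi>3 f\<bar> \<le> \<bar>c\<bar> * (C3 * supnorm f)" unfolding abs_mult by (intro mult_left_mono C3 that) simp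
    then show ?thesis using C1[OF that] C2[OF that] by (simp add: algebra_simps abs_diff_le_iff abs_le_iff)
  qed
  show ?thesis unfolding bounded_linear_functional_def
  proof (intro conjI allI impI)
    fix f g assume fg: "contX f" "contX g"
    show "\<Phi>1 (\<lambda>t. f t + g t) - \<Phi>2 (\<lambda>t. f t + g t) - c * \<Phi>3 (\<lambda>t. f t + g t) =
      \<Phi>1 f - \<Phi>2 f - c * \<Phi>3 f + (\<Phi>1 g - \<Phi>2 g - c * \<Phi>3 g)"
      using blf_add[OF assms(1) fg] blf_add[OF assms(2) fg] blf_add[OF assms(3) fg] by (simp add: algebra_simps)
  next
    fix d f assume f: "contX f"
    show "\<Phi>1 (\<lambda>t. d * f t) - \<Phi>2 (\<lambda>t. d * f t) - c * \<Phi>3 (\<lambda>t. d * f t) = d * (\<Phi>1 f - \<Phi>2 f - c * \<Phi>3 f)"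
      using blf_scale[OF assms(1) f] blf_scale[OF assms(2) f] blf_scale[OF assms(3) f] by (simp add: algebra_simps)
  next
    show "\<exists>C. \<forall>f. contX f \<longrightarrow> \<bar>\<Phi>1 f - \<Phi>2 f - c * \<Phi>3 f\<bar> \<le> C * supnorm f"
      using B by blast
  qed
qed

lemma real_deriv_L: assumes Lbl: "\<forall>b. bounded_linear_functional (L b)" and L': "bounded_linear_functional L'"
  and lim: "((\<lambda>b. opnorm (\<lambda>f. L b f - L a f - (b - a) * L' f) / \<bar>b - a\<bar>) \<longlongrightarrow> 0) (at a)"
  and g: "contX g"
  shows "((\<lambda>b. L b g) has_real_derivative L' g) (at a)"
proof -
  define \<Phi> where "\<Phi> = (\<lambda>b f. L b f - L a f - (b - a) * L' f)"
  have "((\<lambda>b. (L b g - L a g) / (b - a) - L' g) \<longlongrightarrow> 0) (at a)"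
  proof (rule Lim_null_comparison)
    show "\<forall>\<^sub>F b in at a. norm ((L b g - L a g) / (b - a) - L' g) \<le> opnorm (\<Phi> b) / \<bar>b - a\<bar> * supnorm g"
      unfolding eventually_at_filter
    proof (intro always_eventually allI impI)
      fix b assume "b \<noteq> a"
      then have ne: "b - a \<noteq> 0" by simp
      have "(L b g - L a g) / (b - a) - L' g = \<Phi> b g / (b - a)"
        unfolding \<Phi>_def using ne by (simp add: field_simps)
      then have "norm ((L b g - L a g) / (b - a) - L' g) = \<bar>\<Phi> b g\<bar> / \<bar>b - a\<bar>" by simp
      also have "\<dots> \<le> opnorm (\<Phi> b) * supnorm g / \<bar>b - a\<bar>"
        using opnorm_bound[OF _ g, of "\<Phi> b"] blf_combo[OF spec[OF Lbl, of b] spec[OF Lbl, of a] L', of "b - a"]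
        by (intro divide_right_mono) (auto simp: \<Phi>_def)
      finally show "norm ((L b g - L a g) / (b - a) - L' g) \<le> opnorm (\<Phi> b) / \<bar>b - a\<bar> * supnorm g" by simp
    qed
    show "((\<lambda>b. opnorm (\<Phi> b) / \<bar>b - a\<bar> * supnorm g) \<longlongrightarrow> 0) (at a)"
      using tendsto_mult_right_zero[OF lim, of "supnorm g"] unfolding \<Phi>_def by (simp add: mult.commute)
  qed
  then have "((\<lambda>b. (L b g - L a g) / (b - a)) \<longlongrightarrow> L' g) (at a)"
    using Lim_transform[of "\<lambda>_. L' g"] by (simp add: LIM_zero_iff)
  then show ?thesis unfolding has_field_derivative_iff .
qed

lemma cext_deriv: assumes Lbl: "\<forall>b. bounded_linear_functional (L b)" and fd: "functional_differentiable_at L a"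
  shows "\<exists>L'. bounded_linear_functional L' \<and>
    (\<forall>f. continuous_on {-1..0} f \<longrightarrow> ((\<lambda>b. cext (L b) f) has_vector_derivative cext L' f) (at a))"
proof -
  obtain L' where L': "bounded_linear_functional L'"
    and lim: "((\<lambda>b. opnorm (\<lambda>f. L b f - L a f - (b - a) * L' f) / \<bar>b - a\<bar>) \<longlongrightarrow> 0) (at a)"
    using fd unfolding functional_differentiable_at_def by blast
  have "((\<lambda>b. cext (L b) f) has_vector_derivative cext L' f) (at a)" if f: "continuous_on {-1..0} f" for f
  proof -
    have r: "((\<lambda>b. complex_of_real (L b (\<lambda>t. Re (f t)))) has_vector_derivative complex_of_real (L' (\<lambda>t. Re (f t)))) (at a)"
      using real_deriv_L[OF Lbl L' lim contX_Re[OF f]]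
      unfolding has_real_derivative_iff_has_vector_derivative
      by (rule bounded_linear.has_vector_derivative[OF bounded_linear_of_real])
    have i: "((\<lambda>b. complex_of_real (L b (\<lambda>t. Im (f t)))) has_vector_derivative complex_of_real (L' (\<lambda>t. Im (f t)))) (at a)"
      using real_deriv_L[OF Lbl L' lim contX_Im[OF f]]
      unfolding has_real_derivative_iff_has_vector_derivative
      by (rule bounded_linear.has_vector_derivative[OF bounded_linear_of_real])
    show ?thesis unfolding cext_def
      by (intro has_vector_derivative_add r has_vector_derivative_mult_right i)
  qed
  then show ?thesis using L' by blast
qed



lemma pow_mult_vec: assumes "(X :: complex mat) \<in> carrier_mat N N" "v \<in> carrier_vec N"
  shows "(X ^\<^sub>m Suc k) *\<^sub>v v = (X ^\<^sub>m k) *\<^sub>v (X *\<^sub>v v)"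
  using assms by (simp add: assoc_mult_mat_vec[of _ N N _ N])

lemma smult_zero_vec': "(0::complex) \<cdot>\<^sub>v v = 0\<^sub>v (dim_vec v)"
  by (intro eq_vecI) auto

lemma proj_generic:
  fixes X :: "complex mat" and p q :: "complex vec"
  assumes X: "X \<in> carrier_mat N N" and pC: "p \<in> carrier_vec N" and qC: "q \<in> carrier_vec N" and N: "N \<ge> 1"
    and qp: "q \<bullet> p = 1" and Xp: "X *\<^sub>v p = 0\<^sub>v N"
    and qX: "\<And>u. u \<in> carrier_vec N \<Longrightarrow> q \<bullet> (X *\<^sub>v u) = 0"
    and ker: "\<And>u. u \<in> carrier_vec N \<Longrightarrow> X *\<^sub>v u = 0\<^sub>v N \<Longrightarrow> \<exists>t. u = t \<cdot>\<^sub>v p"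
    and pre: "\<And>v. v \<in> carrier_vec N \<Longrightarrow> q \<bullet> v = 0 \<Longrightarrow> \<exists>x\<in>carrier_vec N. q \<bullet> x = 0 \<and> X *\<^sub>v x = v"
  shows "(THE P. P \<in> carrier_mat N N \<and> P * P = P \<and>
       (\<forall>v\<in>carrier_vec N. P *\<^sub>v v = v \<longleftrightarrow> (X ^\<^sub>m N) *\<^sub>v v = 0\<^sub>v N) \<and>
       (\<forall>v\<in>carrier_vec N. P *\<^sub>v v = 0\<^sub>v N \<longleftrightarrow> (\<exists>w\<in>carrier_vec N. v = (X ^\<^sub>m N) *\<^sub>v w)))
     = mat N N (\<lambda>(i, j). (q \<bullet> unit_vec N j \<cdot>\<^sub>v p) $ i)"
proof -
  define B where "B = X ^\<^sub>m N"
  have BC: "B \<in> carrier_mat N N" unfolding B_def using X by simp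
  define P where "P = mat N N (\<lambda>(i, j). (q \<bullet> unit_vec N j \<cdot>\<^sub>v p) $ i)"
  have PC: "P \<in> carrier_mat N N" unfolding P_def by simp
  have Pe: "P $$ (i,j) = q $ j * p $ i" if "i < N" "j < N" for i j
    unfolding P_def using that pC by simp
  have Pv: "P *\<^sub>v v = (q \<bullet> v) \<cdot>\<^sub>v p" if v: "v \<in> carrier_vec N" for v
  proof (rule eq_vecI)
    fix i assume "i < dim_vec ((q \<bullet> v) \<cdot>\<^sub>v p)"
    then have i: "i < N" using pC by simp
    have "(P *\<^sub>v v) $ i = (\<Sum>j\<in>{0..<N}. P $$ (i,j) * v $ j)"
      using i PC v by (simp add: scalar_prod_def row_def)
    also have "\<dots> = (\<Sum>j\<in>{0..<N}. p $ i * (q $ j * v $ j))"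
      using i by (intro sum.cong) (auto simp: Pe)
    also have "\<dots> = p $ i * (q \<bullet> v)" using v by (simp add: scalar_prod_def sum_distrib_left)
    finally show "(P *\<^sub>v v) $ i = ((q \<bullet> v) \<cdot>\<^sub>v p) $ i" using i pC by simp
  qed (use PC pC in simp)
  have Bp: "B *\<^sub>v p = 0\<^sub>v N"
  proof -
    obtain k where k: "N = Suc k" using N by (cases N) auto
    have "B *\<^sub>v p = X ^\<^sub>m k *\<^sub>v (X *\<^sub>v p)" using pow_mult_vec[OF X pC, of k] by (simp add: B_def k)
    then show ?thesis unfolding Xp using mult_mat_vec_zero'[OF pow_carrier_mat[OF X, of k]] by simp
  qed
  have inj: "u = 0\<^sub>v N" if "u \<in> carrier_vec N" "q \<bullet> u = 0" "(X ^\<^sub>m k) *\<^sub>v u = 0\<^sub>v N" for k u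
    using that
  proof (induction k arbitrary: u)
    case 0 then show ?case using X by simp
  next
    case (Suc k)
    have XuC: "X *\<^sub>v u \<in> carrier_vec N" using X Suc.prems(1) by simp
    have "X *\<^sub>v u = 0\<^sub>v N"
      using Suc.IH[OF XuC qX[OF Suc.prems(1)]] Suc.prems(3) unfolding pow_mult_vec[OF X Suc.prems(1)] by simp
    then obtain t where t: "u = t \<cdot>\<^sub>v p" using ker[OF Suc.prems(1)] by blast
    have "q \<bullet> u = t" unfolding t using qp qC pC by simp
    then have "t = 0" using Suc.prems(2) by simp
    then show ?case unfolding t using pC smult_zero_vec' by simp
  qed
  have surj: "\<exists>x\<in>carrier_vec N. q \<bullet> x = 0 \<and> (X ^\<^sub>m k) *\<^sub>v x = v" if "v \<in> carrier_vec N" "q \<bullet> v = 0" for k v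
    using that
  proof (induction k arbitrary: v)
    case 0 then show ?case using X by (intro bexI[of _ v]) auto
  next
    case (Suc k)
    obtain y where y: "y \<in> carrier_vec N" "q \<bullet> y = 0" "(X ^\<^sub>m k) *\<^sub>v y = v" using Suc.IH[OF Suc.prems] by blast
    obtain z where z: "z \<in> carrier_vec N" "q \<bullet> z = 0" "X *\<^sub>v z = y" using pre[OF y(1,2)] by blast
    show ?case
    proof (rule bexI[of _ z])
      show "q \<bullet> z = 0 \<and> X ^\<^sub>m Suc k *\<^sub>v z = v" using z y pow_mult_vec[OF X z(1), of k] by simp
    qed (rule z(1))
  qed
  have rng: "q \<bullet> ((X ^\<^sub>m Suc k) *\<^sub>v w) = 0" if "w \<in> carrier_vec N" for k w
    using that
  proof (induction k arbitrary: w)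
    case 0 then show ?case using X qX[OF 0] by (simp add: pow_mult_vec)
  next
    case (Suc k)
    have "X *\<^sub>v w \<in> carrier_vec N" using X Suc.prems by simp
    then show ?case using Suc.IH unfolding pow_mult_vec[OF X Suc.prems] by blast
  qed
  have rngB: "q \<bullet> (B *\<^sub>v w) = 0" if "w \<in> carrier_vec N" for w
  proof -
    obtain k where k: "N = Suc k" using N by (cases N) auto
    show ?thesis unfolding B_def k by (rule rng[OF that])
  qed
  have injB: "u = 0\<^sub>v N" if "u \<in> carrier_vec N" "q \<bullet> u = 0" "B *\<^sub>v u = 0\<^sub>v N" for u
    using inj that unfolding B_def by blast
  have surjB: "\<exists>x\<in>carrier_vec N. v = B *\<^sub>v x" if "v \<in> carrier_vec N" "q \<bullet> v = 0" for v
    using surj[OF that, of N] unfolding B_def by metis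
  have decomp: "v = (q \<bullet> v) \<cdot>\<^sub>v p + (v - (q \<bullet> v) \<cdot>\<^sub>v p)" if "v \<in> carrier_vec N" for v
    using that pC by (intro eq_vecI) auto
  have qrest: "q \<bullet> (v - (q \<bullet> v) \<cdot>\<^sub>v p) = 0" if "v \<in> carrier_vec N" for v
    using that pC qC qp by (simp add: scalar_prod_minus_distrib[of _ N])
  have Bsm: "B *\<^sub>v (t \<cdot>\<^sub>v p) = 0\<^sub>v N" for t
    using BC pC Bp by (simp add: mult_mat_vec) (intro eq_vecI; simp)
  have cond1: "P *\<^sub>v v = v \<longleftrightarrow> B *\<^sub>v v = 0\<^sub>v N" if v: "v \<in> carrier_vec N" for v
  proof
    assume "P *\<^sub>v v = v"
    then have "v = (q \<bullet> v) \<cdot>\<^sub>v p" using Pv[OF v] by simp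
    then show "B *\<^sub>v v = 0\<^sub>v N" using Bsm by metis
  next
    assume Bv: "B *\<^sub>v v = 0\<^sub>v N"
    define u where "u = v - (q \<bullet> v) \<cdot>\<^sub>v p"
    have uC: "u \<in> carrier_vec N" unfolding u_def using v pC by simp
    have "B *\<^sub>v u = B *\<^sub>v v - B *\<^sub>v ((q \<bullet> v) \<cdot>\<^sub>v p)"
      unfolding u_def using BC v pC by (simp add: mult_minus_distrib_mat_vec)
    then have "B *\<^sub>v u = 0\<^sub>v N" using Bv Bsm by simp
    then have "u = 0\<^sub>v N" using injB[OF uC qrest[OF v, folded u_def]] by simp
    then have "v = (q \<bullet> v) \<cdot>\<^sub>v p" using decomp[OF v] unfolding u_def[symmetric] using pC by simp
    then show "P *\<^sub>v v = v" using Pv[OF v] by simp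
  qed
  have cond2: "P *\<^sub>v v = 0\<^sub>v N \<longleftrightarrow> (\<exists>w\<in>carrier_vec N. v = B *\<^sub>v w)" if v: "v \<in> carrier_vec N" for v
  proof
    assume "P *\<^sub>v v = 0\<^sub>v N"
    then have "(q \<bullet> v) \<cdot>\<^sub>v p = 0\<^sub>v N" using Pv[OF v] by simp
    then have "q \<bullet> ((q \<bullet> v) \<cdot>\<^sub>v p) = 0" using qC by simp
    then have "q \<bullet> v = 0" using qp qC pC by simp
    then show "\<exists>w\<in>carrier_vec N. v = B *\<^sub>v w" using surjB[OF v] by blast
  next
    assume "\<exists>w\<in>carrier_vec N. v = B *\<^sub>v w"
    then have "q \<bullet> v = 0" using rngB by blast
    then show "P *\<^sub>v v = 0\<^sub>v N" using Pv[OF v] pC smult_zero_vec' by simp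
  qed
  have PP: "P * P = P"
  proof (rule eq_matI)
    fix i j assume "i < dim_row P" "j < dim_col P"
    then have ij: "i < N" "j < N" using PC by auto
    have "(P * P) $$ (i,j) = (\<Sum>k\<in>{0..<N}. P $$ (i,k) * P $$ (k,j))"
      using ij PC by (simp add: scalar_prod_def row_def col_def)
    also have "\<dots> = (\<Sum>k\<in>{0..<N}. q $ j * p $ i * (q $ k * p $ k))"
      using ij by (intro sum.cong) (auto simp: Pe)
    also have "\<dots> = q $ j * p $ i * (q \<bullet> p)" using pC by (simp add: scalar_prod_def sum_distrib_left)
    finally show "(P * P) $$ (i,j) = P $$ (i,j)" using qp Pe[OF ij] by simp
  qed (use PC in auto)
  have uniq: "P2 = P" if P2: "P2 \<in> carrier_mat N N"
    "\<forall>v\<in>carrier_vec N. P2 *\<^sub>v v = v \<longleftrightarrow> B *\<^sub>v v = 0\<^sub>v N"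
    "\<forall>v\<in>carrier_vec N. P2 *\<^sub>v v = 0\<^sub>v N \<longleftrightarrow> (\<exists>w\<in>carrier_vec N. v = B *\<^sub>v w)" for P2
  proof -
    have P2v: "P2 *\<^sub>v v = P *\<^sub>v v" if v: "v \<in> carrier_vec N" for v
    proof -
      define u where "u = (q \<bullet> v) \<cdot>\<^sub>v p"
      have uC: "u \<in> carrier_vec N" unfolding u_def using pC by simp
      have rC: "v - u \<in> carrier_vec N" using v uC by simp
      have "P2 *\<^sub>v u = u" using P2(2) uC Bsm unfolding u_def by blast
      moreover have "P2 *\<^sub>v (v - u) = 0\<^sub>v N"
        using P2(3) rC surjB[OF rC qrest[OF v, folded u_def]] by blast
      moreover have "P2 *\<^sub>v v = P2 *\<^sub>v u + P2 *\<^sub>v (v - u)"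
        using decomp[OF v, folded u_def] mult_add_distrib_mat_vec[OF P2(1) uC rC] by metis
      ultimately have "P2 *\<^sub>v v = u" using uC by simp
      then show ?thesis using Pv[OF v] unfolding u_def by simp
    qed
    show ?thesis
    proof (rule eq_matI)
      fix i j assume "i < dim_row P" "j < dim_col P"
      then have ij: "i < N" "j < N" using PC by auto
      have "P2 $$ (i,j) = (P2 *\<^sub>v unit_vec N j) $ i" using ij P2(1) by simp
      also have "\<dots> = (P *\<^sub>v unit_vec N j) $ i" using P2v[of "unit_vec N j"] by simp
      also have "\<dots> = P $$ (i,j)" using ij PC by simp
      finally show "P2 $$ (i,j) = P $$ (i,j)" .
    qed (use PC P2(1) in auto)
  qed
  show ?thesis unfolding B_def[symmetric] P_def[symmetric]
  proof (rule the_equality)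
    show "P \<in> carrier_mat N N \<and> P * P = P \<and>
       (\<forall>v\<in>carrier_vec N. P *\<^sub>v v = v \<longleftrightarrow> B *\<^sub>v v = 0\<^sub>v N) \<and>
       (\<forall>v\<in>carrier_vec N. P *\<^sub>v v = 0\<^sub>v N \<longleftrightarrow> (\<exists>w\<in>carrier_vec N. v = B *\<^sub>v w))"
      using PC PP cond1 cond2 by blast
  next
    fix P2 assume "P2 \<in> carrier_mat N N \<and> P2 * P2 = P2 \<and>
       (\<forall>v\<in>carrier_vec N. P2 *\<^sub>v v = v \<longleftrightarrow> B *\<^sub>v v = 0\<^sub>v N) \<and>
       (\<forall>v\<in>carrier_vec N. P2 *\<^sub>v v = 0\<^sub>v N \<longleftrightarrow> (\<exists>w\<in>carrier_vec N. v = B *\<^sub>v w))"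
    then show "P2 = P" using uniq by blast
  qed
qed



lemma Emul: assumes "(A::complex mat) \<in> carrier_mat n n" "v \<in> carrier_vec n"
  shows "(A - \<mu> \<cdot>\<^sub>m 1\<^sub>m n) *\<^sub>v v = A *\<^sub>v v - \<mu> \<cdot>\<^sub>v v"
proof -
  have "(A - \<mu> \<cdot>\<^sub>m 1\<^sub>m n) *\<^sub>v v = A *\<^sub>v v - (\<mu> \<cdot>\<^sub>m 1\<^sub>m n) *\<^sub>v v"
    by (rule minus_mult_distrib_mat_vec[OF assms(1) _ assms(2)]) simp
  also have "(\<mu> \<cdot>\<^sub>m 1\<^sub>m n) *\<^sub>v v = \<mu> \<cdot>\<^sub>v v" using smult_mat_vec[OF one_carrier_mat assms(2)] assms(2) by simp
  finally show ?thesis .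
qed

lemma Fmul: assumes "(A::complex mat) \<in> carrier_mat n n" "v \<in> carrier_vec n"
  shows "(\<mu> \<cdot>\<^sub>m 1\<^sub>m n - A) *\<^sub>v v = \<mu> \<cdot>\<^sub>v v - A *\<^sub>v v"
proof -
  have "(\<mu> \<cdot>\<^sub>m 1\<^sub>m n - A) *\<^sub>v v = (\<mu> \<cdot>\<^sub>m 1\<^sub>m n) *\<^sub>v v - A *\<^sub>v v"
    by (rule minus_mult_distrib_mat_vec[OF _ assms(1) assms(2)]) simp
  also have "(\<mu> \<cdot>\<^sub>m 1\<^sub>m n) *\<^sub>v v = \<mu> \<cdot>\<^sub>v v" using smult_mat_vec[OF one_carrier_mat assms(2)] assms(2) by simp
  finally show ?thesis .
qed

lemma Deltan_eq: assumes "bounded_linear_functional (L a)"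
  shows "Deltan L \<theta> n \<mu> a = \<mu> - l0 L \<theta> n a - (minv (Dmat \<theta> n - \<mu> \<cdot>\<^sub>m 1\<^sub>m n) *\<^sub>v d1 \<theta> n) \<bullet> Lv L \<theta> n a"
  unfolding Deltan_def cext_pin[OF assms] l0_def
  by (simp add: Lv_def scalar_prod_def lessThan_atLeast0)

lemma An'_entry: assumes Lbl: "\<forall>b. bounded_linear_functional (L b)"
  and L': "\<forall>f. continuous_on {-1..0} f \<longrightarrow> ((\<lambda>b. cext (L b) f) has_vector_derivative cext L' f) (at a)"
  and ij: "i < n+1" "j < n+1"
  shows "An' L \<theta> n a $$ (i,j) = (if i = 0 then (if j = 0 then cext L' (lc \<theta> n 0) else cext L' (lc \<theta> n j)) else 0)"
proof -
  have e: "An' L \<theta> n a $$ (i,j) = vector_derivative (\<lambda>b. An L \<theta> n b $$ (i, j)) (at a)"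
    unfolding An'_def using ij by simp
  have f: "(\<lambda>b. An L \<theta> n b $$ (i, j)) = (\<lambda>b. if i = 0 then (if j = 0 then cext (L b) (lc \<theta> n 0) else cext (L b) (lc \<theta> n j))
     else (if j = 0 then - ((Dmat \<theta> n *\<^sub>v onevec n) $ (i-1)) else Dmat \<theta> n $$ (i-1,j-1)))"
  proof (rule ext)
    fix b
    show "An L \<theta> n b $$ (i, j) = (if i = 0 then (if j = 0 then cext (L b) (lc \<theta> n 0) else cext (L b) (lc \<theta> n j))
     else (if j = 0 then - ((Dmat \<theta> n *\<^sub>v onevec n) $ (i-1)) else Dmat \<theta> n $$ (i-1,j-1)))"
      unfolding An_entry[where L=L and a=b, OF spec[OF Lbl, of b] ij] using ij by (auto simp: l0_def Lv_def)
  qed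
  show ?thesis
  proof (cases "i = 0")
    case True
    then show ?thesis unfolding e f using L' cont_lc
      by (auto intro!: vector_derivative_at)
  next
    case False
    then show ?thesis unfolding e f by simp
  qed
qed



locale mt =
  fixes L :: "real \<Rightarrow> (real \<Rightarrow> real) \<Rightarrow> real" and \<theta> :: "nat \<Rightarrow> real" and n :: nat and a :: real and lam :: complex
  assumes Lbl: "\<forall>b. bounded_linear_functional (L b)"
    and inv: "invertible_mat (Dmat \<theta> n - lam \<cdot>\<^sub>m 1\<^sub>m n)"
    and char: "Deltan L \<theta> n lam a = 0"
    and simple: "D1Delta L \<theta> n lam a \<noteq> 0"
begin

abbreviation "Dm \<equiv> Dmat \<theta> n"
abbreviation "E \<equiv> Dm - lam \<cdot>\<^sub>m 1\<^sub>m n"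
abbreviation "F \<equiv> lam \<cdot>\<^sub>m 1\<^sub>m n - transpose_mat Dm"
abbreviation "G \<equiv> lam \<cdot>\<^sub>m 1\<^sub>m n - Dm"
abbreviation "LV \<equiv> Lv L \<theta> n a"
abbreviation "L0 \<equiv> l0 L \<theta> n a"
abbreviation "dd \<equiv> d1 \<theta> n"
abbreviation "c \<equiv> minv E *\<^sub>v dd"
abbreviation "w \<equiv> minv F *\<^sub>v LV"
abbreviation "\<delta> \<equiv> D1Delta L \<theta> n lam a"

lemma blfa: "bounded_linear_functional (L a)" using Lbl by simp

lemma DmC[simp]: "Dm \<in> carrier_mat n n" by simp
lemma EC[simp]: "E \<in> carrier_mat n n" by (intro minus_carrier_mat smult_carrier_mat one_carrier_mat)
lemma FC[simp]: "F \<in> carrier_mat n n" by (intro minus_carrier_mat) simp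
lemma GC[simp]: "G \<in> carrier_mat n n" by (intro minus_carrier_mat) simp
lemma ddC[simp]: "dd \<in> carrier_vec n" by (rule mult_mat_vec_carrier[OF DmC onevec_carrier])

lemma dim_LV[simp]: "dim_vec LV = n" by (simp add: Lv_def)
lemma dE: "Determinant.det E \<noteq> 0" by (rule invertible_det[OF EC inv])

lemma GE: "G = (-1) \<cdot>\<^sub>m E" by (intro eq_matI) auto
lemma FG: "F = transpose_mat G" by (intro eq_matI) auto
lemma EtF: "transpose_mat E = (-1) \<cdot>\<^sub>m F" by (intro eq_matI) auto

lemma dG: "Determinant.det G \<noteq> 0"
  unfolding GE det_smult using dE by simp
lemma dF: "Determinant.det F \<noteq> 0"
  unfolding FG det_transpose[OF GC] by (rule dG)

lemma cC[simp]: "c \<in> carrier_vec n" using minv_props(1)[OF EC dE] by simp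
lemma wC[simp]: "w \<in> carrier_vec n" using minv_props(1)[OF FC dF] by simp
lemma dim_minvE[simp]: "dim_row (minv E) = n" "dim_col (minv E) = n" using minv_props(1)[OF EC dE] by auto
lemma dim_minvF[simp]: "dim_row (minv F) = n" "dim_col (minv F) = n" using minv_props(1)[OF FC dF] by auto
lemma dim_c[simp]: "dim_vec c = n" using carrier_vecD[OF cC] .
lemma dim_w[simp]: "dim_vec w = n" using carrier_vecD[OF wC] .
lemma Ec: "E *\<^sub>v c = dd" by (rule minv_vec(1)[OF EC dE ddC])
lemma Fw: "F *\<^sub>v w = LV" by (rule minv_vec(1)[OF FC dF Lv_carrier])

lemma Fw_comp: assumes i: "i < n" shows "LV $ i = lam * w $ i - (transpose_mat Dm *\<^sub>v w) $ i"
proof -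
  have "LV $ i = (F *\<^sub>v w) $ i" using Fw by simp
  also have "\<dots> = (lam \<cdot>\<^sub>v w - transpose_mat Dm *\<^sub>v w) $ i" by (simp only: Fmul[of "transpose_mat Dm" n w lam, OF _ wC] transpose_carrier_mat DmC)
  also have "\<dots> = lam * w $ i - (transpose_mat Dm *\<^sub>v w) $ i" using i carrier_vecD[OF wC] by simp
  finally show ?thesis .
qed

lemma Ec_comp: assumes i: "i < n" shows "(Dm *\<^sub>v c) $ i = dd $ i + lam * c $ i"
proof -
  have "dd $ i = (E *\<^sub>v c) $ i" using Ec by simp
  also have "\<dots> = (Dm *\<^sub>v c - lam \<cdot>\<^sub>v c) $ i" by (simp only: Emul[OF DmC cC])
  also have "\<dots> = (Dm *\<^sub>v c) $ i - lam * c $ i" using i carrier_vecD[OF cC] by simp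
  finally show ?thesis by (simp add: algebra_simps)
qed

lemma wE: assumes y: "y \<in> carrier_vec n" shows "w \<bullet> (E *\<^sub>v y) = - (LV \<bullet> y)"
proof -
  have "w \<bullet> (E *\<^sub>v y) = (transpose_mat E *\<^sub>v w) \<bullet> y" using transpose_scalar[OF EC y wC] by simp
  also have "transpose_mat E *\<^sub>v w = (-1) \<cdot>\<^sub>v LV" unfolding EtF using smult_mat_vec[OF FC wC] Fw by simp
  also have "((-1) \<cdot>\<^sub>v LV) \<bullet> y = - (LV \<bullet> y)" using y by simp
  finally show ?thesis .
qed

lemma char': "lam = L0 + c \<bullet> LV"
  using char unfolding Deltan_eq[where L=L and a=a, OF blfa] by (simp add: algebra_simps)

lemma D1: "\<exists>c'. c' \<in> carrier_vec n \<and> E *\<^sub>v c' = c \<and> \<delta> = 1 - c' \<bullet> LV"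
proof -
  obtain c' where c': "c' \<in> carrier_vec n" "E *\<^sub>v c' = c"
    "\<And>j. j < n \<Longrightarrow> ((\<lambda>\<mu>. (minv (Dm - \<mu> \<cdot>\<^sub>m 1\<^sub>m n) *\<^sub>v dd) $ j) has_field_derivative c' $ j) (at lam)"
    using c_deriv[OF DmC ddC dE] by blast
  have "((\<lambda>\<mu>. \<mu> - L0 - (\<Sum>j<n. (minv (Dm - \<mu> \<cdot>\<^sub>m 1\<^sub>m n) *\<^sub>v dd) $ j * LV $ j)) has_field_derivative
        1 - 0 - (\<Sum>j<n. c' $ j * LV $ j)) (at lam)"
    by (intro DERIV_diff DERIV_ident DERIV_const DERIV_sum DERIV_cmult_right c'(3)) auto
  moreover have "(\<lambda>\<mu>. Deltan L \<theta> n \<mu> a) = (\<lambda>\<mu>. \<mu> - L0 - (\<Sum>j<n. (minv (Dm - \<mu> \<cdot>\<^sub>m 1\<^sub>m n) *\<^sub>v dd) $ j * LV $ j))"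
    unfolding Deltan_eq[where L=L and a=a, OF blfa] by (simp add: scalar_prod_def lessThan_atLeast0)
  ultimately have "((\<lambda>\<mu>. Deltan L \<theta> n \<mu> a) has_field_derivative 1 - (c' \<bullet> LV)) (at lam)"
    by (simp add: scalar_prod_def lessThan_atLeast0)
  then have "\<delta> = 1 - c' \<bullet> LV" unfolding D1Delta_def by (rule DERIV_imp_deriv)
  then show ?thesis using c' by blast
qed

lemma wc: "w \<bullet> c = \<delta> - 1"
proof -
  obtain c' where c': "c' \<in> carrier_vec n" "E *\<^sub>v c' = c" "\<delta> = 1 - c' \<bullet> LV" using D1 by blast
  have "w \<bullet> c = - (LV \<bullet> c')" using wE[OF c'(1)] c'(2) by simp
  also have "LV \<bullet> c' = c' \<bullet> LV" by (rule comm_scalar_prod[OF Lv_carrier c'(1)])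
  finally show ?thesis using c'(3) by simp
qed


abbreviation "p \<equiv> consv n 1 c"
abbreviation "q \<equiv> consv n (1/\<delta>) ((1/\<delta>) \<cdot>\<^sub>v w)"
abbreviation "AA \<equiv> An L \<theta> n a"

lemma AAC[simp]: "AA \<in> carrier_mat (Suc n) (Suc n)" using An_carrier[of L \<theta> n a] by simp
lemma pC[simp]: "p \<in> carrier_vec (n+1)" unfolding consv_def by simp
lemma qC[simp]: "q \<in> carrier_vec (n+1)" unfolding consv_def by simp
lemma p0: "p $ 0 = 1" unfolding consv_def by simp
lemma q0: "q $ 0 = 1/\<delta>" unfolding consv_def by simp
lemma pS: "i < n \<Longrightarrow> p $ Suc i = c $ i" unfolding consv_def by simp
lemma qS: "i < n \<Longrightarrow> q $ Suc i = (1/\<delta>) * w $ i" unfolding consv_def by simp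
lemma tp: "tailv n p = c" unfolding consv_def tailv_def by (intro eq_vecI) auto
lemma tq: "tailv n q = (1/\<delta>) \<cdot>\<^sub>v w" unfolding consv_def tailv_def by (intro eq_vecI) auto

lemma ddw: "dd \<bullet> w = - (c \<bullet> LV)"
proof -
  have "dd \<bullet> w = w \<bullet> (E *\<^sub>v c)" unfolding Ec by (rule comm_scalar_prod[OF ddC wC])
  also have "\<dots> = - (LV \<bullet> c)" by (rule wE[OF cC])
  also have "LV \<bullet> c = c \<bullet> LV" by (rule comm_scalar_prod[OF Lv_carrier cC])
  finally show ?thesis .
qed

lemma G1: "transpose_mat AA *\<^sub>v q = lam \<cdot>\<^sub>v q"
proof (rule eq_vecI)
  show "dim_vec (transpose_mat AA *\<^sub>v q) = dim_vec (lam \<cdot>\<^sub>v q)" using qC by simp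
  fix i assume "i < dim_vec (lam \<cdot>\<^sub>v q)"
  then have i: "i < n+1" using qC by simp
  show "(transpose_mat AA *\<^sub>v q) $ i = (lam \<cdot>\<^sub>v q) $ i"
  proof (cases i)
    case 0
    have "(transpose_mat AA *\<^sub>v q) $ 0 = L0 * (1/\<delta>) - dd \<bullet> ((1/\<delta>) \<cdot>\<^sub>v w)"
      using AnT_mult(1)[where L=L and a=a, OF blfa qC] unfolding q0 tq .
    also have "dd \<bullet> ((1/\<delta>) \<cdot>\<^sub>v w) = (1/\<delta>) * (dd \<bullet> w)" by simp
    also have "L0 * (1/\<delta>) - (1/\<delta>) * (dd \<bullet> w) = (1/\<delta>) * lam"
    proof -
      have e: "L0 + c \<bullet> LV = lam" using char' by simp
      have "L0 * (1/\<delta>) - (1/\<delta>) * (- (c \<bullet> LV)) = (1/\<delta>) * (L0 + c \<bullet> LV)" by (simp add: algebra_simps)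
      then show ?thesis unfolding ddw e .
    qed
    finally show ?thesis using 0 q0 qC by simp
  next
    case (Suc i')
    then have i': "i' < n" using i by simp
    have "(transpose_mat AA *\<^sub>v q) $ Suc i' = (1/\<delta>) * LV $ i' + (transpose_mat Dm *\<^sub>v ((1/\<delta>) \<cdot>\<^sub>v w)) $ i'"
      using AnT_mult(2)[where L=L and a=a, OF blfa qC i'] unfolding q0 tq .
    also have "transpose_mat Dm *\<^sub>v ((1/\<delta>) \<cdot>\<^sub>v w) = (1/\<delta>) \<cdot>\<^sub>v (transpose_mat Dm *\<^sub>v w)"
      by (rule mult_mat_vec[of _ n n]) simp_all
    also have "(1/\<delta>) * LV $ i' + ((1/\<delta>) \<cdot>\<^sub>v (transpose_mat Dm *\<^sub>v w)) $ i' = lam * ((1/\<delta>) * w $ i')"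
      using i' Fw_comp[OF i'] simple by (simp add: field_simps)
    finally show ?thesis using Suc qS[OF i'] qC i' by simp
  qed
qed

lemma G2: "q \<bullet> p = 1"
proof -
  have "q \<bullet> p = (1/\<delta>) * 1 + ((1/\<delta>) \<cdot>\<^sub>v w) \<bullet> c"
    using scalar_prod_split[OF pC, of q] unfolding q0 p0 tp tq .
  also have "((1/\<delta>) \<cdot>\<^sub>v w) \<bullet> c = (1/\<delta>) * (w \<bullet> c)" by simp
  finally show ?thesis unfolding wc using simple by (simp add: field_simps)
qed


lemma tailv_C[simp]: "tailv n v \<in> carrier_vec n" unfolding tailv_def by simp
lemma dim_tailv[simp]: "dim_vec (tailv n v) = n" unfolding tailv_def by simp
lemma tailv_idx: "i < n \<Longrightarrow> tailv n v $ i = v $ Suc i" unfolding tailv_def by simp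
lemma tailv_consv: "y \<in> carrier_vec n \<Longrightarrow> tailv n (consv n y0 y) = y"
  unfolding tailv_def consv_def by (intro eq_vecI) auto

lemma Ap: "AA *\<^sub>v p = lam \<cdot>\<^sub>v p"
proof (rule eq_vecI)
  show "dim_vec (AA *\<^sub>v p) = dim_vec (lam \<cdot>\<^sub>v p)" using pC by simp
  fix i assume "i < dim_vec (lam \<cdot>\<^sub>v p)"
  then have i: "i < n+1" using pC by simp
  show "(AA *\<^sub>v p) $ i = (lam \<cdot>\<^sub>v p) $ i"
  proof (cases i)
    case 0
    have "(AA *\<^sub>v p) $ 0 = L0 * 1 + LV \<bullet> c"
      using An_mult(1)[where L=L and a=a, OF blfa pC] unfolding p0 tp .
    also have "LV \<bullet> c = c \<bullet> LV" by (rule comm_scalar_prod[OF Lv_carrier cC])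
    finally show ?thesis using 0 p0 pC char' by simp
  next
    case (Suc i')
    then have i': "i' < n" using i by simp
    have "(AA *\<^sub>v p) $ Suc i' = (Dm *\<^sub>v c) $ i' - 1 * dd $ i'"
      using An_mult(2)[where L=L and a=a, OF blfa pC i'] unfolding p0 tp .
    then show ?thesis using Suc Ec_comp[OF i'] pS[OF i'] pC i' by simp
  qed
qed

lemma qA: assumes u: "u \<in> carrier_vec (n+1)" shows "q \<bullet> (AA *\<^sub>v u) = lam * (q \<bullet> u)"
proof -
  have "q \<bullet> (AA *\<^sub>v u) = (transpose_mat AA *\<^sub>v q) \<bullet> u" using transpose_scalar[OF An_carrier u qC] by simp
  also have "\<dots> = lam * (q \<bullet> u)" unfolding G1 using u qC by simp
  finally show ?thesis .
qed

lemma kerA: assumes u: "u \<in> carrier_vec (n+1)" and Au: "AA *\<^sub>v u = lam \<cdot>\<^sub>v u"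
  shows "u = u $ 0 \<cdot>\<^sub>v p"
proof -
  have Et: "E *\<^sub>v tailv n u = u $ 0 \<cdot>\<^sub>v dd"
  proof (rule eq_vecI)
    show "dim_vec (E *\<^sub>v tailv n u) = dim_vec (u $ 0 \<cdot>\<^sub>v dd)" by simp
    fix i assume "i < dim_vec (u $ 0 \<cdot>\<^sub>v dd)"
    then have i: "i < n" by simp
    have "(AA *\<^sub>v u) $ Suc i = (Dm *\<^sub>v tailv n u) $ i - u $ 0 * dd $ i"
      by (rule An_mult(2)[where L=L and a=a, OF blfa u i])
    moreover have "(AA *\<^sub>v u) $ Suc i = lam * u $ Suc i" using Au u i by simp
    moreover have "(E *\<^sub>v tailv n u) $ i = (Dm *\<^sub>v tailv n u) $ i - lam * u $ Suc i"
      unfolding Emul[OF DmC tailv_C] using i by (simp add: tailv_idx)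
    ultimately show "(E *\<^sub>v tailv n u) $ i = (u $ 0 \<cdot>\<^sub>v dd) $ i" using i by simp
  qed
  have "tailv n u = minv E *\<^sub>v (E *\<^sub>v tailv n u)" using minv_vec(2)[OF EC dE tailv_C] by simp
  also have "\<dots> = u $ 0 \<cdot>\<^sub>v c" unfolding Et by (rule mult_mat_vec[OF minv_props(1)[OF EC dE] ddC])
  finally have tu: "tailv n u = u $ 0 \<cdot>\<^sub>v c" .
  show ?thesis
  proof (rule eq_vecI)
    show "dim_vec u = dim_vec (u $ 0 \<cdot>\<^sub>v p)" using u pC by simp
    fix i assume "i < dim_vec (u $ 0 \<cdot>\<^sub>v p)"
    then have i: "i < n+1" using pC by simp
    show "u $ i = (u $ 0 \<cdot>\<^sub>v p) $ i"
    proof (cases i)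
      case 0 then show ?thesis using p0 pC by simp
    next
      case (Suc i')
      then have i': "i' < n" using i by simp
      have "u $ Suc i' = tailv n u $ i'" using tailv_idx[OF i'] by simp
      also have "\<dots> = u $ 0 * c $ i'" unfolding tu using i' by simp
      finally show ?thesis using Suc pS[OF i'] pC i' by simp
    qed
  qed
qed

lemma preA: assumes v: "v \<in> carrier_vec (n+1)" and qv: "q \<bullet> v = 0"
  shows "\<exists>x\<in>carrier_vec (n+1). q \<bullet> x = 0 \<and> AA *\<^sub>v x - lam \<cdot>\<^sub>v x = v"
proof -
  define y where "y = minv E *\<^sub>v tailv n v"
  have yC: "y \<in> carrier_vec n" unfolding y_def using minv_props(1)[OF EC dE] by simp
  have Ey: "E *\<^sub>v y = tailv n v" unfolding y_def by (rule minv_vec(1)[OF EC dE tailv_C])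
  have "(1/\<delta>) * v $ 0 + ((1/\<delta>) \<cdot>\<^sub>v w) \<bullet> tailv n v = 0"
    using scalar_prod_split[OF v, of q] qv unfolding q0 tq by simp
  then have "(1/\<delta>) * (v $ 0 + w \<bullet> tailv n v) = 0" by (simp add: algebra_simps)
  then have "v $ 0 + w \<bullet> tailv n v = 0" using simple by simp
  moreover have "w \<bullet> tailv n v = - (LV \<bullet> y)" using wE[OF yC] Ey by simp
  ultimately have v0: "v $ 0 = LV \<bullet> y" by (simp add: algebra_simps)
  define x0 where "x0 = consv n 0 y"
  have x0C: "x0 \<in> carrier_vec (n+1)" unfolding x0_def consv_def by simp
  have tx0: "tailv n x0 = y" unfolding x0_def by (rule tailv_consv[OF yC])
  have x00: "x0 $ 0 = 0" unfolding x0_def consv_def by simp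
  have Ax0: "AA *\<^sub>v x0 - lam \<cdot>\<^sub>v x0 = v"
  proof (rule eq_vecI)
    show "dim_vec (AA *\<^sub>v x0 - lam \<cdot>\<^sub>v x0) = dim_vec v" using v x0C by simp
    fix i assume "i < dim_vec v"
    then have i: "i < n+1" using v by simp
    show "(AA *\<^sub>v x0 - lam \<cdot>\<^sub>v x0) $ i = v $ i"
    proof (cases i)
      case 0
      have "(AA *\<^sub>v x0) $ 0 = L0 * 0 + LV \<bullet> y"
        using An_mult(1)[where L=L and a=a, OF blfa x0C] unfolding x00 tx0 .
      then show ?thesis using 0 x0C x00 v0 by simp
    next
      case (Suc i')
      then have i': "i' < n" using i by simp
      have "(AA *\<^sub>v x0) $ Suc i' = (Dm *\<^sub>v y) $ i' - 0 * dd $ i'"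
        using An_mult(2)[where L=L and a=a, OF blfa x0C i'] unfolding x00 tx0 .
      moreover have "x0 $ Suc i' = y $ i'" using tailv_idx[OF i', of x0] tx0 by simp
      moreover have "(E *\<^sub>v y) $ i' = (Dm *\<^sub>v y) $ i' - lam * y $ i'"
        unfolding Emul[OF DmC yC] using i' yC by simp
      moreover have "v $ Suc i' = (E *\<^sub>v y) $ i'" unfolding Ey using tailv_idx[OF i'] by simp
      ultimately show ?thesis using Suc x0C i' by simp
    qed
  qed
  define x where "x = x0 - (q \<bullet> x0) \<cdot>\<^sub>v p"
  have xC: "x \<in> carrier_vec (n+1)" unfolding x_def using x0C pC by simp
  have "q \<bullet> x = q \<bullet> x0 - q \<bullet> ((q \<bullet> x0) \<cdot>\<^sub>v p)"
    unfolding x_def by (rule scalar_prod_minus_distrib[OF qC x0C]) (use pC in simp)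
  then have qx: "q \<bullet> x = 0" using G2 pC qC by simp
  have "AA *\<^sub>v x = AA *\<^sub>v x0 - AA *\<^sub>v ((q \<bullet> x0) \<cdot>\<^sub>v p)"
    unfolding x_def by (rule mult_minus_distrib_mat_vec[OF An_carrier x0C]) (use pC in simp)
  also have "AA *\<^sub>v ((q \<bullet> x0) \<cdot>\<^sub>v p) = (q \<bullet> x0) \<cdot>\<^sub>v (lam \<cdot>\<^sub>v p)"
    unfolding Ap[symmetric] by (rule mult_mat_vec[OF An_carrier pC])
  finally have Ax: "AA *\<^sub>v x = AA *\<^sub>v x0 - (q \<bullet> x0) \<cdot>\<^sub>v (lam \<cdot>\<^sub>v p)" .
  have "AA *\<^sub>v x - lam \<cdot>\<^sub>v x = AA *\<^sub>v x0 - (q \<bullet> x0) \<cdot>\<^sub>v (lam \<cdot>\<^sub>v p) - lam \<cdot>\<^sub>v x"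
    unfolding Ax ..
  also have "\<dots> = AA *\<^sub>v x0 - lam \<cdot>\<^sub>v x0"
    unfolding x_def using x0C pC by (intro eq_vecI) (auto simp: algebra_simps)
  finally have "AA *\<^sub>v x - lam \<cdot>\<^sub>v x = AA *\<^sub>v x0 - lam \<cdot>\<^sub>v x0" .
  then show ?thesis using Ax0 qx xC by blast
qed


lemma SP: "spectral_projection AA lam = mat (n + 1) (n + 1) (\<lambda>(i, j). (q \<bullet> unit_vec (n + 1) j \<cdot>\<^sub>v p) $ i)"
proof -
  define X where "X = AA - lam \<cdot>\<^sub>m 1\<^sub>m (n+1)"
  have XC: "X \<in> carrier_mat (n+1) (n+1)" unfolding X_def by (intro minus_carrier_mat) simp
  have Xu: "X *\<^sub>v u = AA *\<^sub>v u - lam \<cdot>\<^sub>v u" if "u \<in> carrier_vec (n+1)" for u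
    unfolding X_def by (rule Emul[OF An_carrier that])
  have Xp: "X *\<^sub>v p = 0\<^sub>v (n+1)" unfolding Xu[OF pC] Ap using pC by (intro eq_vecI) auto
  have qX: "q \<bullet> (X *\<^sub>v u) = 0" if u: "u \<in> carrier_vec (n+1)" for u
  proof -
    have "q \<bullet> (X *\<^sub>v u) = q \<bullet> (AA *\<^sub>v u) - q \<bullet> (lam \<cdot>\<^sub>v u)"
      unfolding Xu[OF u] by (rule scalar_prod_minus_distrib[OF qC]) (use u mult_mat_vec_carrier[OF AAC, of u] in simp_all)
    then show ?thesis using qA[OF u] u qC by simp
  qed
  have ker: "\<exists>t. u = t \<cdot>\<^sub>v p" if u: "u \<in> carrier_vec (n+1)" and Xu0: "X *\<^sub>v u = 0\<^sub>v (n+1)" for u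
  proof -
    have "AA *\<^sub>v u = lam \<cdot>\<^sub>v u"
    proof (rule eq_vecI)
      fix i assume "i < dim_vec (lam \<cdot>\<^sub>v u)"
      then have i: "i < n+1" using u by simp
      have "(X *\<^sub>v u) $ i = 0" using Xu0 i by simp
      then show "(AA *\<^sub>v u) $ i = (lam \<cdot>\<^sub>v u) $ i" unfolding Xu[OF u] using i u by simp
    qed (use u in simp)
    then show ?thesis using kerA[OF u] by blast
  qed
  have pre: "\<exists>x\<in>carrier_vec (n+1). q \<bullet> x = 0 \<and> X *\<^sub>v x = v" if "v \<in> carrier_vec (n+1)" "q \<bullet> v = 0" for v
    using preA[OF that] Xu by auto
  have "spectral_projection AA lam = (THE P. P \<in> carrier_mat (n+1) (n+1) \<and> P * P = P \<and>
       (\<forall>v\<in>carrier_vec (n+1). P *\<^sub>v v = v \<longleftrightarrow> (X ^\<^sub>m (n+1)) *\<^sub>v v = 0\<^sub>v (n+1)) \<and>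
       (\<forall>v\<in>carrier_vec (n+1). P *\<^sub>v v = 0\<^sub>v (n+1) \<longleftrightarrow> (\<exists>w\<in>carrier_vec (n+1). v = (X ^\<^sub>m (n+1)) *\<^sub>v w)))"
    unfolding spectral_projection_def Let_def X_def by simp
  also have "\<dots> = mat (n + 1) (n + 1) (\<lambda>(i, j). (q \<bullet> unit_vec (n + 1) j \<cdot>\<^sub>v p) $ i)"
    by (rule proj_generic[OF XC pC qC _ G2 Xp qX ker pre]) auto
  finally show ?thesis .
qed

lemma cext_Pop': "y \<in> carrier_vec n \<Longrightarrow> cext (L a) (Pop \<theta> n y) = y \<bullet> LV"
  unfolding cext_Pop[OF blfa] by (simp add: scalar_prod_def lessThan_atLeast0 Lv_def)

lemma formula_entry: assumes j: "j < n+1"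
  shows "(1 / \<delta>) * (headv (unit_vec (n + 1) j) + cext (L a) (Pop \<theta> n (minv G *\<^sub>v tailv n (unit_vec (n + 1) j))))
    = q \<bullet> unit_vec (n + 1) j"
proof -
  have KC: "minv G \<in> carrier_mat n n" by (rule minv_props(1)[OF GC dG])
  have qj: "q \<bullet> unit_vec (n + 1) j = q $ j" using j by simp
  show ?thesis
  proof (cases j)
    case 0
    have "minv G *\<^sub>v tailv n (unit_vec (Suc n) 0) = 0\<^sub>v n" unfolding tailv_unit0 by (rule mult_mat_vec_zero'[OF KC])
    then show ?thesis unfolding qj 0 using q0 by (simp add: headv_unit cext_Pop')
  next
    case (Suc j')
    then have j': "j' < n" using j by simp
    define e :: "complex vec" where "e = unit_vec n j'"
    have eC: "e \<in> carrier_vec n" unfolding e_def by simp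
    have KeC: "minv G *\<^sub>v e \<in> carrier_vec n" using KC eC by simp
    have "(minv G *\<^sub>v e) \<bullet> LV = (minv G *\<^sub>v e) \<bullet> (F *\<^sub>v w)" unfolding Fw ..
    also have "\<dots> = (transpose_mat F *\<^sub>v (minv G *\<^sub>v e)) \<bullet> w" using transpose_scalar[OF FC wC KeC] by simp
    also have "transpose_mat F = G" unfolding FG by simp
    also have "G *\<^sub>v (minv G *\<^sub>v e) = e" by (rule minv_vec(1)[OF GC dG eC])
    also have "e \<bullet> w = w $ j'" unfolding e_def using j' by simp
    finally have *: "(minv G *\<^sub>v e) \<bullet> LV = w $ j'" .
    have "tailv n (unit_vec (Suc n) (Suc j')) = e" unfolding e_def by (rule tailv_unitS)
    then show ?thesis unfolding qj Suc using qS[OF j'] * KeC j' by (simp add: headv_unit cext_Pop')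
  qed
qed

lemma SP2: "spectral_projection AA lam = mat (n + 1) (n + 1) (\<lambda>(i, j).
            ((1 / \<delta>) * (headv (unit_vec (n + 1) j)
               + cext (L a) (Pop \<theta> n (minv G *\<^sub>v tailv n (unit_vec (n + 1) j)))) \<cdot>\<^sub>v p) $ i)"
  unfolding SP
proof (rule eq_matI)
  fix i j assume "i < dim_row (mat (n + 1) (n + 1) (\<lambda>(i, j).
            ((1 / \<delta>) * (headv (unit_vec (n + 1) j)
               + cext (L a) (Pop \<theta> n (minv G *\<^sub>v tailv n (unit_vec (n + 1) j)))) \<cdot>\<^sub>v p) $ i))"
    "j < dim_col (mat (n + 1) (n + 1) (\<lambda>(i, j).
            ((1 / \<delta>) * (headv (unit_vec (n + 1) j)
               + cext (L a) (Pop \<theta> n (minv G *\<^sub>v tailv n (unit_vec (n + 1) j)))) \<cdot>\<^sub>v p) $ i))"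
  then have ij: "i < n+1" "j < n+1" by auto
  show "mat (n + 1) (n + 1) (\<lambda>(i, j). (q \<bullet> unit_vec (n + 1) j \<cdot>\<^sub>v p) $ i) $$ (i, j) =
    mat (n + 1) (n + 1) (\<lambda>(i, j).
            ((1 / \<delta>) * (headv (unit_vec (n + 1) j)
               + cext (L a) (Pop \<theta> n (minv G *\<^sub>v tailv n (unit_vec (n + 1) j)))) \<cdot>\<^sub>v p) $ i) $$ (i, j)"
    unfolding index_mat(1)[OF ij] split formula_entry[OF ij(2)] ..
qed auto


lemma DER: assumes fd: "functional_differentiable_at L a"
  shows "q \<bullet> (An' L \<theta> n a *\<^sub>v p) = - (D2Delta L \<theta> n lam a / \<delta>)"
proof -
  obtain L' where L': "bounded_linear_functional L'"
    and der: "\<forall>f. continuous_on {-1..0} f \<longrightarrow> ((\<lambda>b. cext (L b) f) has_vector_derivative cext L' f) (at a)"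
    using cext_deriv[OF Lbl fd] by blast
  define M0 where "M0 = cext L' (lc \<theta> n 0)"
  define MV where "MV = vec n (\<lambda>j. cext L' (lc \<theta> n (j+1)))"
  have MVC: "MV \<in> carrier_vec n" unfolding MV_def by simp
  have pinc: "continuous_on {-1..0} (pin \<theta> n lam)" unfolding pin_def by (intro continuous_intros cont_lag cont_Pop)
  have "((\<lambda>b. Deltan L \<theta> n lam b) has_vector_derivative 0 - cext L' (pin \<theta> n lam)) (at a)"
    unfolding Deltan_def by (intro has_vector_derivative_diff has_vector_derivative_const der[rule_format, OF pinc])
  then have D2: "D2Delta L \<theta> n lam a = - cext L' (pin \<theta> n lam)" unfolding D2Delta_def
    using vector_derivative_at by fastforce
  have cp: "cext L' (pin \<theta> n lam) = M0 + c \<bullet> MV"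
    unfolding cext_pin[OF L'] M0_def MV_def by (simp add: scalar_prod_def lessThan_atLeast0)
  define A' where "A' = An' L \<theta> n a"
  have A'C: "A' \<in> carrier_mat (Suc n) (Suc n)" unfolding A'_def An'_def by simp
  have ent: "A' $$ (i,j) = (if i = 0 then (if j = 0 then cext L' (lc \<theta> n 0) else cext L' (lc \<theta> n j)) else 0)"
    if "i < Suc n" "j < Suc n" for i j
    unfolding A'_def using An'_entry[OF Lbl der] that by simp
  have e: "(A' *\<^sub>v p) $ i = (\<Sum>k\<in>{0..<Suc n}. A' $$ (i,k) * p $ k)" if "i < Suc n" for i
    using that A'C pC by (simp add: scalar_prod_def row_def)
  have Ap0: "(A' *\<^sub>v p) $ 0 = M0 + MV \<bullet> c"
    unfolding e[OF zero_less_Suc] sum.atLeast0_lessThan_Suc_shift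
    using ent p0 pS by (simp add: M0_def MV_def scalar_prod_def)
  have ApS: "(A' *\<^sub>v p) $ Suc i = 0" if "i < n" for i
    unfolding e[OF Suc_mono[OF that]] using ent that by simp
  have tA: "tailv n (A' *\<^sub>v p) = 0\<^sub>v n"
    unfolding tailv_def using ApS by (intro eq_vecI) auto
  have A'pC: "A' *\<^sub>v p \<in> carrier_vec (n+1)" using A'C pC by simp
  have "q \<bullet> (A' *\<^sub>v p) = (1/\<delta>) * (M0 + MV \<bullet> c) + ((1/\<delta>) \<cdot>\<^sub>v w) \<bullet> 0\<^sub>v n"
    using scalar_prod_split[OF A'pC, of q] unfolding q0 tq tA Ap0 .
  also have "((1/\<delta>) \<cdot>\<^sub>v w) \<bullet> 0\<^sub>v n = 0" by simp
  also have "MV \<bullet> c = c \<bullet> MV" by (rule comm_scalar_prod[OF MVC cC])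
  finally have "q \<bullet> (A' *\<^sub>v p) = (M0 + c \<bullet> MV) / \<delta>" by simp
  moreover have "- (D2Delta L \<theta> n lam a / \<delta>) = (M0 + c \<bullet> MV) / \<delta>" unfolding D2 cp by (simp add: minus_divide_left)
  ultimately show ?thesis unfolding A'_def by simp
qed

end

theorem mainTheorem16:
  fixes L :: "real \<Rightarrow> (real \<Rightarrow> real) \<Rightarrow> real"
    and \<theta> :: "nat \<Rightarrow> real" and n :: nat and a :: real and lam :: complex
  assumes n1: "n \<ge> 1"
    and mesh0: "\<theta> 0 = 0" and meshdec: "\<forall>i<n. \<theta> (i + 1) < \<theta> i" and meshn: "-1 \<le> \<theta> n"
    and Lbl: "\<forall>b. bounded_linear_functional (L b)"
    and inv: "invertible_mat (Dmat \<theta> n - lam \<cdot>\<^sub>m 1\<^sub>m n)"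
    and char: "Deltan L \<theta> n lam a = 0"
    and simple: "D1Delta L \<theta> n lam a \<noteq> 0"
  defines "p \<equiv> consv n 1 (minv (Dmat \<theta> n - lam \<cdot>\<^sub>m 1\<^sub>m n) *\<^sub>v (Dmat \<theta> n *\<^sub>v onevec n))"
    and "q \<equiv> consv n (1 / D1Delta L \<theta> n lam a)
               ((1 / D1Delta L \<theta> n lam a) \<cdot>\<^sub>v
                 (minv (lam \<cdot>\<^sub>m 1\<^sub>m n - transpose_mat (Dmat \<theta> n))
                   *\<^sub>v vec n (\<lambda>j. cext (L a) (\<lambda>t. complex_of_real (lag \<theta> n (j + 1) t)))))"
  shows "transpose_mat (An L \<theta> n a) *\<^sub>v q = lam \<cdot>\<^sub>v q
    \<and> scalar_prod q p = 1
    \<and> spectral_projection (An L \<theta> n a) lam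
        = mat (n + 1) (n + 1) (\<lambda>(i, j).
            ((1 / D1Delta L \<theta> n lam a) *
              (headv (unit_vec (n + 1) j)
               + cext (L a) (Pop \<theta> n (minv (lam \<cdot>\<^sub>m 1\<^sub>m n - Dmat \<theta> n) *\<^sub>v tailv n (unit_vec (n + 1) j))))
             \<cdot>\<^sub>v p) $ i)
    \<and> spectral_projection (An L \<theta> n a) lam
        = mat (n + 1) (n + 1) (\<lambda>(i, j). (scalar_prod q (unit_vec (n + 1) j) \<cdot>\<^sub>v p) $ i)
    \<and> (functional_differentiable_at L a \<longrightarrow>
         scalar_prod q (An' L \<theta> n a *\<^sub>v p) = - (D2Delta L \<theta> n lam a / D1Delta L \<theta> n lam a))"
proof -
  have M: "mt L \<theta> n a lam" using Lbl inv char simple by unfold_locales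
  have LVe: "vec n (\<lambda>j. cext (L a) (\<lambda>t. complex_of_real (lag \<theta> n (j + 1) t))) = Lv L \<theta> n a"
    by (simp add: Lv_def lc_def)
  note G1 = mt.G1[OF M] and G2 = mt.G2[OF M] and SP = mt.SP[OF M] and SP2 = mt.SP2[OF M] and DER = mt.DER[OF M]
  show ?thesis unfolding p_def q_def LVe using G1 G2 SP SP2 DER by simp
qed

end
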